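(* A strongly regular Weingarten surface with $\nu_1=f(\nu)$, $\nu_2=g(\nu)$ admits geometric principal parameters which are isothermal (i.e. with $E=G$, $F=0$) if and only if $f'(\nu)+g'(\nu)=0$, i.e. if and only if the mean curvature $H=\frac{f(\nu)+g(\nu)}{2}$ is constant.
   Context: For a surface $x=x(u,v)$ without umbilical points parameterized by principal parameters ($F=M=0$, with $E,F,G$, $L,M,N$ the coefficients of the first and second fundamental forms): $\nu_1=L/E$, $\nu_2=N/G$, $\gamma_1=-\frac{E_v}{2E\sqrt G}$, $\gamma_2=\frac{G_u}{2G\sqrt E}$. The surface is strongly regular if $(\nu_1-\nu_2)\gamma_1\gamma_2\neq0$, with the convention $\nu_1-\nu_2>0$. A strongly regular surface is Weingarten if there exist differentiable $f(\nu),g(\nu)$, $\nu\in\mathcal I\subseteq\mathbb R$, with $f-g>0$, $f'g'\neq0$, and a differentiable $\nu(u,v)\in\mathcal I$ with $\nu_u\nu_v\neq0$, such that $\nu_1=f(\nu)$, $\nu_2=g(\nu)$. With $\Phi$ an antiderivative of $f'/(f-g)$ and $\Psi$ an antiderivative of $g'/(g-f)$, put $\lambda=\ln\sqrt E+\Phi(\nu)$ and $\mu=\ln\sqrt G+\Psi(\nu)$. Principal parameters are geometric principal parameters if $\lambda$ and $\mu$ are constants. *)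

theory Defs
  imports "HOL-Analysis.Analysis" "HOL-Analysis.Cross3"
begin

definition pd_u :: "(real \<times> real \<Rightarrow> 'a::real_normed_vector) \<Rightarrow> real \<times> real \<Rightarrow> 'a" where
  "pd_u h p = vector_derivative (\<lambda>t. h (t, snd p)) (at (fst p))"

definition pd_v :: "(real \<times> real \<Rightarrow> 'a::real_normed_vector) \<Rightarrow> real \<times> real \<Rightarrow> 'a" where
  "pd_v h p = vector_derivative (\<lambda>t. h (fst p, t)) (at (snd p))"

fun Ck_on :: "nat \<Rightarrow> (real \<times> real) set \<Rightarrow> (real \<times> real \<Rightarrow> 'a::real_normed_vector) \<Rightarrow> bool" where
  "Ck_on 0 U h = continuous_on U h"
| "Ck_on (Suc k) U h = ((\<forall>p\<in>U. h differentiable (at p)) \<and> Ck_on k U (pd_u h) \<and> Ck_on k U (pd_v h))"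

definition smooth_on2 :: "(real \<times> real) set \<Rightarrow> (real \<times> real \<Rightarrow> 'a::real_normed_vector) \<Rightarrow> bool" where
  "smooth_on2 U h \<longleftrightarrow> (\<forall>k. Ck_on k U h)"

type_synonym surf = "real \<times> real \<Rightarrow> real ^ 3"

definition fE :: "surf \<Rightarrow> real \<times> real \<Rightarrow> real" where
  "fE x p = pd_u x p \<bullet> pd_u x p"
definition fF :: "surf \<Rightarrow> real \<times> real \<Rightarrow> real" where
  "fF x p = pd_u x p \<bullet> pd_v x p"
definition fG :: "surf \<Rightarrow> real \<times> real \<Rightarrow> real" where
  "fG x p = pd_v x p \<bullet> pd_v x p"

definition unit_normal :: "surf \<Rightarrow> real \<times> real \<Rightarrow> real ^ 3" where
  "unit_normal x p = (1 / norm (cross3 (pd_u x p) (pd_v x p))) *\<^sub>R (cross3 (pd_u x p) (pd_v x p))"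

definition fL :: "surf \<Rightarrow> real \<times> real \<Rightarrow> real" where
  "fL x p = pd_u (pd_u x) p \<bullet> unit_normal x p"
definition fM :: "surf \<Rightarrow> real \<times> real \<Rightarrow> real" where
  "fM x p = pd_v (pd_u x) p \<bullet> unit_normal x p"
definition fN :: "surf \<Rightarrow> real \<times> real \<Rightarrow> real" where
  "fN x p = pd_v (pd_v x) p \<bullet> unit_normal x p"

definition nu1 :: "surf \<Rightarrow> real \<times> real \<Rightarrow> real" where
  "nu1 x p = fL x p / fE x p"
definition nu2 :: "surf \<Rightarrow> real \<times> real \<Rightarrow> real" where
  "nu2 x p = fN x p / fG x p"
definition gamma1 :: "surf \<Rightarrow> real \<times> real \<Rightarrow> real" where
  "gamma1 x p = - pd_v (fE x) p / (2 * fE x p * sqrt (fG x p))"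
definition gamma2 :: "surf \<Rightarrow> real \<times> real \<Rightarrow> real" where
  "gamma2 x p = pd_u (fG x) p / (2 * fG x p * sqrt (fE x p))"

definition principal_param :: "(real \<times> real) set \<Rightarrow> surf \<Rightarrow> bool" where
  "principal_param U x \<longleftrightarrow> open U \<and> smooth_on2 U x \<and>
     (\<forall>p\<in>U. cross3 (pd_u x p) (pd_v x p) \<noteq> 0 \<and> fF x p = 0 \<and> fM x p = 0)"

text \<open>Strongly regular, with the convention nu1 - nu2 > 0 (this also excludes umbilics).\<close>
definition strongly_regular :: "(real \<times> real) set \<Rightarrow> surf \<Rightarrow> bool" where
  "strongly_regular U x \<longleftrightarrow> principal_param U x \<and>
     (\<forall>p\<in>U. nu1 x p - nu2 x p > 0 \<and> (nu1 x p - nu2 x p) * gamma1 x p * gamma2 x p \<noteq> 0)"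

definition weingarten ::
  "(real \<times> real) set \<Rightarrow> surf \<Rightarrow> real set \<Rightarrow> (real \<Rightarrow> real) \<Rightarrow> (real \<Rightarrow> real)
     \<Rightarrow> (real \<times> real \<Rightarrow> real) \<Rightarrow> bool" where
  "weingarten U x I f g nu \<longleftrightarrow> strongly_regular U x \<and>
     is_interval I \<and>
     (\<forall>t\<in>I. f differentiable (at t) \<and> g differentiable (at t) \<and>
             f t - g t > 0 \<and> deriv f t * deriv g t \<noteq> 0) \<and>
     (\<forall>p\<in>U. nu differentiable (at p) \<and> nu p \<in> I \<and>
             pd_u nu p * pd_v nu p \<noteq> 0 \<and>
             nu1 x p = f (nu p) \<and> nu2 x p = g (nu p))"

definition lam :: "surf \<Rightarrow> (real \<Rightarrow> real) \<Rightarrow> (real \<times> real \<Rightarrow> real) \<Rightarrow> real \<times> real \<Rightarrow> real" where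
  "lam x Phi nu p = ln (sqrt (fE x p)) + Phi (nu p)"
definition mu :: "surf \<Rightarrow> (real \<Rightarrow> real) \<Rightarrow> (real \<times> real \<Rightarrow> real) \<Rightarrow> real \<times> real \<Rightarrow> real" where
  "mu x Psi nu p = ln (sqrt (fG x p)) + Psi (nu p)"

definition geometric_principal :: "(real \<times> real) set \<Rightarrow> surf \<Rightarrow> (real \<Rightarrow> real) \<Rightarrow> (real \<Rightarrow> real)
     \<Rightarrow> (real \<times> real \<Rightarrow> real) \<Rightarrow> bool" where
  "geometric_principal U x Phi Psi nu \<longleftrightarrow>
     (\<exists>c. \<forall>p\<in>U. lam x Phi nu p = c) \<and> (\<exists>d. \<forall>p\<in>U. mu x Psi nu p = d)"

definition diffeo2 :: "(real \<times> real) set \<Rightarrow> (real \<times> real) set \<Rightarrow> (real \<times> real \<Rightarrow> real \<times> real) \<Rightarrow> bool" where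
  "diffeo2 V U phi \<longleftrightarrow> open V \<and> open U \<and> bij_betw phi V U \<and> smooth_on2 V phi \<and>
     smooth_on2 U (inv_into V phi)"

definition admits_isothermal_geometric_principal ::
  "(real \<times> real) set \<Rightarrow> surf \<Rightarrow> real set \<Rightarrow> (real \<Rightarrow> real) \<Rightarrow> (real \<Rightarrow> real)
     \<Rightarrow> (real \<times> real \<Rightarrow> real) \<Rightarrow> (real \<Rightarrow> real) \<Rightarrow> (real \<Rightarrow> real) \<Rightarrow> bool" where
  "admits_isothermal_geometric_principal U x I f g nu Phi Psi \<longleftrightarrow>
     (\<exists>V phi. diffeo2 V U phi \<and>
        weingarten V (x \<circ> phi) I f g (nu \<circ> phi) \<and>
        geometric_principal V (x \<circ> phi) Phi Psi (nu \<circ> phi) \<and>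
        (\<forall>q\<in>V. fE (x \<circ> phi) q = fG (x \<circ> phi) q \<and> fF (x \<circ> phi) q = 0))"

end

theory Submission
  imports Defs
begin


lemma pd_u_vd:
  assumes "(h has_derivative D) (at p)"
  shows "((\<lambda>t. h (t, snd p)) has_vector_derivative D (1,0)) (at (fst p))"
proof -
  have 1: "((\<lambda>t. (t, snd p)) has_derivative (\<lambda>s. (s, 0))) (at (fst p))"
    by (auto intro!: derivative_eq_intros)
  have "((h \<circ> (\<lambda>t. (t, snd p))) has_derivative (D \<circ> (\<lambda>s. (s, 0)))) (at (fst p))"
    using has_derivative_compose[OF 1, of h D] assms by (simp add: o_def)
  moreover have "(D \<circ> (\<lambda>s. (s, 0))) = (\<lambda>s. s *\<^sub>R D (1,0))"
  proof
    fix s :: real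
    have "linear D" using assms has_derivative_linear by blast
    then have "D (s *\<^sub>R (1,0)) = s *\<^sub>R D (1,0)" by (rule linear_scale)
    then show "(D \<circ> (\<lambda>s. (s, 0))) s = s *\<^sub>R D (1,0)" by simp
  qed
  ultimately show ?thesis by (simp add: has_vector_derivative_def o_def)
qed

lemma pd_v_vd:
  assumes "(h has_derivative D) (at p)"
  shows "((\<lambda>t. h (fst p, t)) has_vector_derivative D (0,1)) (at (snd p))"
proof -
  have 1: "((\<lambda>t. (fst p, t)) has_derivative (\<lambda>s. (0, s))) (at (snd p))"
    by (auto intro!: derivative_eq_intros)
  have "((h \<circ> (\<lambda>t. (fst p, t))) has_derivative (D \<circ> (\<lambda>s. (0, s)))) (at (snd p))"
    using has_derivative_compose[OF 1, of h D] assms by (simp add: o_def)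
  moreover have "(D \<circ> (\<lambda>s. (0, s))) = (\<lambda>s. s *\<^sub>R D (0,1))"
  proof
    fix s :: real
    have "linear D" using assms has_derivative_linear by blast
    then have "D (s *\<^sub>R (0,1)) = s *\<^sub>R D (0,1)" by (rule linear_scale)
    then show "(D \<circ> (\<lambda>s. (0, s))) s = s *\<^sub>R D (0,1)" by simp
  qed
  ultimately show ?thesis by (simp add: has_vector_derivative_def o_def)
qed

lemma pd_u_eq: "(h has_derivative D) (at p) \<Longrightarrow> pd_u h p = D (1,0)"
  unfolding pd_u_def by (rule vector_derivative_at[OF pd_u_vd])

lemma pd_v_eq: "(h has_derivative D) (at p) \<Longrightarrow> pd_v h p = D (0,1)"
  unfolding pd_v_def by (rule vector_derivative_at[OF pd_v_vd])

lemma pd_u_works: "h differentiable (at p) \<Longrightarrow>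
   ((\<lambda>t. h (t, snd p)) has_vector_derivative pd_u h p) (at (fst p))"
  unfolding differentiable_def using pd_u_vd pd_u_eq by metis

lemma pd_v_works: "h differentiable (at p) \<Longrightarrow>
   ((\<lambda>t. h (fst p, t)) has_vector_derivative pd_v h p) (at (snd p))"
  unfolding differentiable_def using pd_v_vd pd_v_eq by metis

lemma pd_u_real: "(h::real\<times>real\<Rightarrow>real) differentiable (at p) \<Longrightarrow>
   ((\<lambda>t. h (t, snd p)) has_real_derivative pd_u h p) (at (fst p))"
  using pd_u_works has_real_derivative_iff_has_vector_derivative by blast

lemma pd_v_real: "(h::real\<times>real\<Rightarrow>real) differentiable (at p) \<Longrightarrow>
   ((\<lambda>t. h (fst p, t)) has_real_derivative pd_v h p) (at (snd p))"
  using pd_v_works has_real_derivative_iff_has_vector_derivative by blast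

lemma open_slice_u: "open U \<Longrightarrow> open {t::real. (t, s::real) \<in> U}"
proof -
  have "continuous_on UNIV (\<lambda>t::real. (t,s))" by (intro continuous_intros)
  then have "open ((\<lambda>t::real. (t,s)) -` U)" if "open U" for U using that open_vimage by blast
  then show "open U \<Longrightarrow> open {t. (t, s) \<in> U}" by (auto simp add: vimage_def)
qed

lemma open_slice_v: "open U \<Longrightarrow> open {t::real. (s::real, t) \<in> U}"
proof -
  have "continuous_on UNIV (\<lambda>t::real. (s,t))" by (intro continuous_intros)
  then have "open ((\<lambda>t::real. (s,t)) -` U)" if "open U" for U using that open_vimage by blast
  then show "open U \<Longrightarrow> open {t. (s, t) \<in> U}" by (auto simp add: vimage_def)
qed

lemma pd_u_cong:
  assumes "open U" "p \<in> U" "\<And>q. q \<in> U \<Longrightarrow> h q = h' q"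
  shows "pd_u h p = pd_u h' p"
proof -
  let ?S = "{t. (t, snd p) \<in> U}"
  have S: "open ?S" "fst p \<in> ?S" using open_slice_u[OF assms(1), of "snd p"] assms(2) by auto
  have e1: "\<And>t. t \<in> ?S \<Longrightarrow> h (t, snd p) = h' (t, snd p)" using assms(3) by auto
  have e2: "\<And>t. t \<in> ?S \<Longrightarrow> h' (t, snd p) = h (t, snd p)" using assms(3) by auto
  have "\<And>D. ((\<lambda>t. h (t, snd p)) has_vector_derivative D) (at (fst p)) \<longleftrightarrow>
             ((\<lambda>t. h' (t, snd p)) has_vector_derivative D) (at (fst p))"
  proof
    fix D assume "((\<lambda>t. h (t, snd p)) has_vector_derivative D) (at (fst p))"
    then show "((\<lambda>t. h' (t, snd p)) has_vector_derivative D) (at (fst p))"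
      by (rule has_vector_derivative_transform_within_open[OF _ S(1) S(2)]) (use e1 in auto)
  next
    fix D assume "((\<lambda>t. h' (t, snd p)) has_vector_derivative D) (at (fst p))"
    then show "((\<lambda>t. h (t, snd p)) has_vector_derivative D) (at (fst p))"
      by (rule has_vector_derivative_transform_within_open[OF _ S(1) S(2)]) (use e2 in auto)
  qed
  then show ?thesis unfolding pd_u_def vector_derivative_def by simp
qed

lemma pd_v_cong:
  assumes "open U" "p \<in> U" "\<And>q. q \<in> U \<Longrightarrow> h q = h' q"
  shows "pd_v h p = pd_v h' p"
proof -
  let ?S = "{t. (fst p, t) \<in> U}"
  have S: "open ?S" "snd p \<in> ?S" using open_slice_v[OF assms(1), of "fst p"] assms(2) by auto
  have e1: "\<And>t. t \<in> ?S \<Longrightarrow> h (fst p, t) = h' (fst p, t)" using assms(3) by auto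
  have e2: "\<And>t. t \<in> ?S \<Longrightarrow> h' (fst p, t) = h (fst p, t)" using assms(3) by auto
  have "\<And>D. ((\<lambda>t. h (fst p, t)) has_vector_derivative D) (at (snd p)) \<longleftrightarrow>
             ((\<lambda>t. h' (fst p, t)) has_vector_derivative D) (at (snd p))"
  proof
    fix D assume "((\<lambda>t. h (fst p, t)) has_vector_derivative D) (at (snd p))"
    then show "((\<lambda>t. h' (fst p, t)) has_vector_derivative D) (at (snd p))"
      by (rule has_vector_derivative_transform_within_open[OF _ S(1) S(2)]) (use e1 in auto)
  next
    fix D assume "((\<lambda>t. h' (fst p, t)) has_vector_derivative D) (at (snd p))"
    then show "((\<lambda>t. h (fst p, t)) has_vector_derivative D) (at (snd p))"
      by (rule has_vector_derivative_transform_within_open[OF _ S(1) S(2)]) (use e2 in auto)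
  qed
  then show ?thesis unfolding pd_v_def vector_derivative_def by simp
qed

lemma Ck_on_cong:
  assumes "open U" "\<And>q. q \<in> U \<Longrightarrow> h q = h' q" "Ck_on k U h"
  shows "Ck_on k U h'"
  using assms(2,3)
proof (induction k arbitrary: h h')
  case 0
  then have "continuous_on U h" by simp
  then have "continuous_on U h'" by (rule continuous_on_eq) (use 0(1) in blast)
  then show ?case by simp
next
  case (Suc k)
  have d: "\<forall>p\<in>U. h' differentiable (at p)"
  proof
    fix p assume "p \<in> U"
    have "h differentiable (at p)" using Suc.prems(2) \<open>p \<in> U\<close> by simp
    then obtain D where hD: "(h has_derivative D) (at p)" unfolding differentiable_def by blast
    have "(h' has_derivative D) (at p)"
      by (rule has_derivative_transform_within_open[OF hD assms(1) \<open>p \<in> U\<close> Suc.prems(1)])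
    then show "h' differentiable (at p)" unfolding differentiable_def by blast
  qed
  have eu: "pd_u h q = pd_u h' q" if "q \<in> U" for q by (rule pd_u_cong[OF assms(1) that Suc.prems(1)])
  have ev: "pd_v h q = pd_v h' q" if "q \<in> U" for q by (rule pd_v_cong[OF assms(1) that Suc.prems(1)])
  have pu: "Ck_on k U (pd_u h)" "Ck_on k U (pd_v h)" using Suc.prems(2) by simp_all
  have "Ck_on k U (pd_u h')"
    by (rule Suc.IH[of "pd_u h" "pd_u h'", OF eu pu(1)])
  moreover have "Ck_on k U (pd_v h')"
    by (rule Suc.IH[of "pd_v h" "pd_v h'", OF ev pu(2)])
  ultimately show ?case using d by simp
qed

lemma Ck_on_mono: "Ck_on (Suc k) U h \<Longrightarrow> Ck_on k U h"
proof (induction k arbitrary: h)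
  case 0
  then have "\<forall>p\<in>U. h differentiable (at p)" by simp
  then have "\<forall>p\<in>U. isCont h p" using differentiable_imp_continuous_within by blast
  then have "continuous_on U h" by (rule continuous_at_imp_continuous_on)
  then show ?case by simp
next
  case (Suc k)
  have a: "\<forall>p\<in>U. h differentiable (at p)" "Ck_on (Suc k) U (pd_u h)" "Ck_on (Suc k) U (pd_v h)"
    using Suc.prems by simp_all
  have "Ck_on k U (pd_u h)" using Suc.IH[OF a(2)] .
  moreover have "Ck_on k U (pd_v h)" using Suc.IH[OF a(3)] .
  ultimately show ?case using a(1) by simp
qed

lemma Ck_on_le: "m \<le> k \<Longrightarrow> Ck_on k U h \<Longrightarrow> Ck_on m U h"
proof (induction k)
  case 0 then show ?case by simp
next
  case (Suc k) then show ?case using Ck_on_mono le_Suc_eq by blast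
qed

lemma smooth_pd_u: "smooth_on2 U h \<Longrightarrow> smooth_on2 U (pd_u h)"
  unfolding smooth_on2_def proof
  fix k assume "\<forall>k. Ck_on k U h" then have "Ck_on (Suc k) U h" by blast
  then show "Ck_on k U (pd_u h)" by simp
qed
lemma smooth_pd_v: "smooth_on2 U h \<Longrightarrow> smooth_on2 U (pd_v h)"
  unfolding smooth_on2_def proof
  fix k assume "\<forall>k. Ck_on k U h" then have "Ck_on (Suc k) U h" by blast
  then show "Ck_on k U (pd_v h)" by simp
qed
lemma smooth_diff: "smooth_on2 U h \<Longrightarrow> p \<in> U \<Longrightarrow> h differentiable (at p)"
  unfolding smooth_on2_def proof -
  assume "\<forall>k. Ck_on k U h" "p \<in> U" then have "Ck_on (Suc 0) U h" by blast
  then show ?thesis using \<open>p \<in> U\<close> by simp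
qed
lemma smooth_cont: "smooth_on2 U h \<Longrightarrow> continuous_on U h"
  unfolding smooth_on2_def proof -
  assume "\<forall>k. Ck_on k U h" then have "Ck_on 0 U h" by blast
  then show ?thesis by simp
qed


lemma pd_u_from: "((\<lambda>t. h (t, snd p)) has_vector_derivative D) (at (fst p)) \<Longrightarrow> pd_u h p = D"
  unfolding pd_u_def by (rule vector_derivative_at)
lemma pd_v_from: "((\<lambda>t. h (fst p, t)) has_vector_derivative D) (at (snd p)) \<Longrightarrow> pd_v h p = D"
  unfolding pd_v_def by (rule vector_derivative_at)
lemma pd_u_from_real: "((\<lambda>t. h (t, snd p)) has_real_derivative D) (at (fst p)) \<Longrightarrow> pd_u h p = D"
  by (rule pd_u_from) (simp add: has_real_derivative_iff_has_vector_derivative)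
lemma pd_v_from_real: "((\<lambda>t. h (fst p, t)) has_real_derivative D) (at (snd p)) \<Longrightarrow> pd_v h p = D"
  by (rule pd_v_from) (simp add: has_real_derivative_iff_has_vector_derivative)

lemma Ck_on_SucD:
  assumes "Ck_on (Suc k) U h"
  shows "\<And>p. p \<in> U \<Longrightarrow> h differentiable (at p)" "Ck_on k U (pd_u h)" "Ck_on k U (pd_v h)" "Ck_on k U h"
  using assms Ck_on_mono[OF assms] by simp_all

lemma Ck_on_SucI:
  assumes "\<And>p. p \<in> U \<Longrightarrow> h differentiable (at p)" "Ck_on k U (pd_u h)" "Ck_on k U (pd_v h)"
  shows "Ck_on (Suc k) U h"
  using assms by simp

lemma Ck_on_const: "Ck_on k U (\<lambda>p. c)"
proof (induction k arbitrary: c)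
  case 0 then show ?case by (simp add: continuous_on_const)
next
  case (Suc k)
  have "pd_u (\<lambda>p. c) = (\<lambda>p. 0)" "pd_v (\<lambda>p. c) = (\<lambda>p. 0)"
    unfolding pd_u_def pd_v_def by simp_all
  then show ?case using Suc by simp
qed

lemma Ck_on_add:
  assumes U: "open U"
  shows "Ck_on k U a \<Longrightarrow> Ck_on k U b \<Longrightarrow> Ck_on k U (\<lambda>p. a p + b p)"
proof (induction k arbitrary: a b)
  case 0 then show ?case by (simp add: continuous_on_add)
next
  case (Suc k)
  note da = Ck_on_SucD[OF Suc.prems(1)] and db = Ck_on_SucD[OF Suc.prems(2)]
  have fu: "pd_u a q + pd_u b q = pd_u (\<lambda>p. a p + b p) q" if "q \<in> U" for q
    by (rule sym, rule pd_u_from, rule has_vector_derivative_add[OF pd_u_works pd_u_works])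
       (use da db that in auto)
  have fv: "pd_v a q + pd_v b q = pd_v (\<lambda>p. a p + b p) q" if "q \<in> U" for q
    by (rule sym, rule pd_v_from, rule has_vector_derivative_add[OF pd_v_works pd_v_works])
       (use da db that in auto)
  show ?case
  proof (rule Ck_on_SucI)
    show "(\<lambda>p. a p + b p) differentiable (at p)" if "p \<in> U" for p
      using da(1)[OF that] db(1)[OF that] by (rule differentiable_add)
    show "Ck_on k U (pd_u (\<lambda>p. a p + b p))"
      by (rule Ck_on_cong[OF U fu Suc.IH[OF da(2) db(2)]])
    show "Ck_on k U (pd_v (\<lambda>p. a p + b p))"
      by (rule Ck_on_cong[OF U fv Suc.IH[OF da(3) db(3)]])
  qed
qed

lemma Ck_on_bil:
  fixes prod :: "'a::real_normed_vector \<Rightarrow> 'b::real_normed_vector \<Rightarrow> 'c::real_normed_vector"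
  assumes bb: "bounded_bilinear prod" and U: "open U"
  shows "Ck_on k U a \<Longrightarrow> Ck_on k U b \<Longrightarrow> Ck_on k U (\<lambda>p. prod (a p) (b p))"
proof (induction k arbitrary: a b)
  case 0 then show ?case using bounded_bilinear.continuous_on[OF bb] by simp
next
  case (Suc k)
  note da = Ck_on_SucD[OF Suc.prems(1)] and db = Ck_on_SucD[OF Suc.prems(2)]
  have fu: "prod (a q) (pd_u b q) + prod (pd_u a q) (b q) = pd_u (\<lambda>p. prod (a p) (b p)) q" if "q \<in> U" for q
  proof -
    have "((\<lambda>t. prod (a (t, snd q)) (b (t, snd q))) has_vector_derivative
           prod (a (fst q, snd q)) (pd_u b q) + prod (pd_u a q) (b (fst q, snd q))) (at (fst q))"
      by (rule bounded_bilinear.has_vector_derivative[OF bb pd_u_works pd_u_works])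
         (use da db that in auto)
    from pd_u_from[where h="\<lambda>p. prod (a p) (b p)", OF this] show ?thesis by simp
  qed
  have fv: "prod (a q) (pd_v b q) + prod (pd_v a q) (b q) = pd_v (\<lambda>p. prod (a p) (b p)) q" if "q \<in> U" for q
  proof -
    have "((\<lambda>t. prod (a (fst q, t)) (b (fst q, t))) has_vector_derivative
           prod (a (fst q, snd q)) (pd_v b q) + prod (pd_v a q) (b (fst q, snd q))) (at (snd q))"
      by (rule bounded_bilinear.has_vector_derivative[OF bb pd_v_works pd_v_works])
         (use da db that in auto)
    from pd_v_from[where h="\<lambda>p. prod (a p) (b p)", OF this] show ?thesis by simp
  qed
  show ?case
  proof (rule Ck_on_SucI)
    show "(\<lambda>p. prod (a p) (b p)) differentiable (at p)" if pU: "p \<in> U" for p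
    proof -
      obtain Da Db where "(a has_derivative Da) (at p)" "(b has_derivative Db) (at p)"
        using da(1)[OF pU] db(1)[OF pU] unfolding differentiable_def by blast
      from bounded_bilinear.FDERIV[OF bb this] show ?thesis by (rule differentiableI)
    qed
    show "Ck_on k U (pd_u (\<lambda>p. prod (a p) (b p)))"
      by (rule Ck_on_cong[OF U fu Ck_on_add[OF U Suc.IH[OF da(4) db(2)] Suc.IH[OF da(2) db(4)]]])
    show "Ck_on k U (pd_v (\<lambda>p. prod (a p) (b p)))"
      by (rule Ck_on_cong[OF U fv Ck_on_add[OF U Suc.IH[OF da(4) db(3)] Suc.IH[OF da(3) db(4)]]])
  qed
qed

lemmas Ck_on_scaleR = Ck_on_bil[OF bounded_bilinear_scaleR]
lemmas Ck_on_mult = Ck_on_bil[OF bounded_bilinear_mult]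
lemmas Ck_on_inner = Ck_on_bil[OF bounded_bilinear_inner]

lemma bounded_bilinear_cross3: "bounded_bilinear (cross3)"
  using bilinear_cross bilinear_conv_bounded_bilinear by blast

lemmas Ck_on_cross = Ck_on_bil[OF bounded_bilinear_cross3]

lemma Ck_on_uminus: "open U \<Longrightarrow> Ck_on k U a \<Longrightarrow> Ck_on k U (\<lambda>p. - a p)"
  using Ck_on_scaleR[of U k "\<lambda>p. -1" a] by (simp add: Ck_on_const)

lemma Ck_on_diff: "open U \<Longrightarrow> Ck_on k U a \<Longrightarrow> Ck_on k U b \<Longrightarrow> Ck_on k U (\<lambda>p. a p - b p)"
  using Ck_on_add[of U k a "\<lambda>p. - b p"] Ck_on_uminus[of U k b] by simp

lemma Ck_on_inverse:
  assumes U: "open U"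
  shows "Ck_on k U a \<Longrightarrow> (\<And>p. p \<in> U \<Longrightarrow> a p \<noteq> (0::real)) \<Longrightarrow> Ck_on k U (\<lambda>p. inverse (a p))"
proof (induction k arbitrary: a)
  case 0 then show ?case by (simp add: continuous_on_inverse)
next
  case (Suc k)
  note da = Ck_on_SucD[OF Suc.prems(1)]
  have ih: "Ck_on k U (\<lambda>p. inverse (a p))" using Suc.IH[OF da(4) Suc.prems(2)] .
  have fu: "(- pd_u a q) * (inverse (a q) * inverse (a q)) = pd_u (\<lambda>p. inverse (a p)) q" if "q \<in> U" for q
  proof -
    have "((\<lambda>t. inverse (a (t, snd q))) has_real_derivative
           - (pd_u a q * inverse ((a (fst q, snd q)) ^ Suc (Suc 0)))) (at (fst q))"
      by (rule DERIV_inverse_fun[OF pd_u_real]) (use da Suc.prems(2) that in auto)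
    from pd_u_from_real[where h="\<lambda>p. inverse (a p)", OF this] show ?thesis by (simp add: power2_eq_square)
  qed
  have fv: "(- pd_v a q) * (inverse (a q) * inverse (a q)) = pd_v (\<lambda>p. inverse (a p)) q" if "q \<in> U" for q
  proof -
    have "((\<lambda>t. inverse (a (fst q, t))) has_real_derivative
           - (pd_v a q * inverse ((a (fst q, snd q)) ^ Suc (Suc 0)))) (at (snd q))"
      by (rule DERIV_inverse_fun[OF pd_v_real]) (use da Suc.prems(2) that in auto)
    from pd_v_from_real[where h="\<lambda>p. inverse (a p)", OF this] show ?thesis by (simp add: power2_eq_square)
  qed
  show ?case
  proof (rule Ck_on_SucI)
    show "(\<lambda>p. inverse (a p)) differentiable (at p)" if "p \<in> U" for p
    proof (rule differentiable_compose[of inverse])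
      show "inverse differentiable (at (a p))"
        using DERIV_inverse[of "a p" UNIV] Suc.prems(2)[OF that] by (auto intro: differentiableI)
      show "a differentiable (at p)" using da(1)[OF that] .
    qed
    show "Ck_on k U (pd_u (\<lambda>p. inverse (a p)))"
      by (rule Ck_on_cong[OF U fu Ck_on_mult[OF U Ck_on_uminus[OF U da(2)] Ck_on_mult[OF U ih ih]]])
    show "Ck_on k U (pd_v (\<lambda>p. inverse (a p)))"
      by (rule Ck_on_cong[OF U fv Ck_on_mult[OF U Ck_on_uminus[OF U da(3)] Ck_on_mult[OF U ih ih]]])
  qed
qed

lemma Ck_on_sqrt:
  assumes U: "open U"
  shows "Ck_on k U a \<Longrightarrow> (\<And>p. p \<in> U \<Longrightarrow> a p > (0::real)) \<Longrightarrow> Ck_on k U (\<lambda>p. sqrt (a p))"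
proof (induction k arbitrary: a)
  case 0 then show ?case by (simp add: continuous_on_real_sqrt)
next
  case (Suc k)
  note da = Ck_on_SucD[OF Suc.prems(1)]
  have ih: "Ck_on k U (\<lambda>p. sqrt (a p))" using Suc.IH[OF da(4) Suc.prems(2)] .
  have ih2: "Ck_on k U (\<lambda>p. inverse (sqrt (a p)))"
  proof (rule Ck_on_inverse[OF U ih])
    fix p assume "p \<in> U" then show "sqrt (a p) \<noteq> 0" using Suc.prems(2)[of p] by simp
  qed
  have fu: "(inverse (sqrt (a q))) * (pd_u a q * (1/2)) = pd_u (\<lambda>p. sqrt (a p)) q" if "q \<in> U" for q
  proof -
    have "((\<lambda>t. sqrt (a (t, snd q))) has_real_derivative
           (inverse (sqrt (a (fst q, snd q))) / 2) * pd_u a q) (at (fst q))"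
      by (rule DERIV_chain2[OF DERIV_real_sqrt pd_u_real]) (use da Suc.prems(2) that in auto)
    from pd_u_from_real[where h="\<lambda>p. sqrt (a p)", OF this] show ?thesis by simp
  qed
  have fv: "(inverse (sqrt (a q))) * (pd_v a q * (1/2)) = pd_v (\<lambda>p. sqrt (a p)) q" if "q \<in> U" for q
  proof -
    have "((\<lambda>t. sqrt (a (fst q, t))) has_real_derivative
           (inverse (sqrt (a (fst q, snd q))) / 2) * pd_v a q) (at (snd q))"
      by (rule DERIV_chain2[OF DERIV_real_sqrt pd_v_real]) (use da Suc.prems(2) that in auto)
    from pd_v_from_real[where h="\<lambda>p. sqrt (a p)", OF this] show ?thesis by simp
  qed
  have c2: "Ck_on k U (\<lambda>p. 1/2::real)" by (rule Ck_on_const)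
  show ?case
  proof (rule Ck_on_SucI)
    show "(\<lambda>p. sqrt (a p)) differentiable (at p)" if "p \<in> U" for p
    proof (rule differentiable_compose[of sqrt])
      show "sqrt differentiable (at (a p))"
        using DERIV_real_sqrt[of "a p"] Suc.prems(2)[OF that]
        by (auto intro!: differentiableI has_field_derivative_imp_has_derivative)
      show "a differentiable (at p)" using da(1)[OF that] .
    qed
    show "Ck_on k U (pd_u (\<lambda>p. sqrt (a p)))"
      by (rule Ck_on_cong[OF U fu Ck_on_mult[OF U ih2 Ck_on_mult[OF U da(2) c2]]])
    show "Ck_on k U (pd_v (\<lambda>p. sqrt (a p)))"
      by (rule Ck_on_cong[OF U fv Ck_on_mult[OF U ih2 Ck_on_mult[OF U da(3) c2]]])
  qed
qed


lemma chain_vd: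
  fixes G :: "real \<times> real \<Rightarrow> 'a::real_normed_vector"
  assumes G: "(G has_derivative DG) (at (f1 x, f2 x))"
    and f1: "(f1 has_real_derivative d1) (at x)" and f2: "(f2 has_real_derivative d2) (at x)"
  shows "((\<lambda>t. G (f1 t, f2 t)) has_vector_derivative (d1 *\<^sub>R DG (1,0) + d2 *\<^sub>R DG (0,1))) (at x)"
proof -
  have P: "((\<lambda>t. (f1 t, f2 t)) has_vector_derivative (d1, d2)) (at x)"
    using f1 f2 unfolding has_real_derivative_iff_has_vector_derivative by (rule has_vector_derivative_Pair)
  then have P': "((\<lambda>t. (f1 t, f2 t)) has_derivative (\<lambda>h. h *\<^sub>R (d1, d2))) (at x)"
    by (simp add: has_vector_derivative_def)
  have "((G \<circ> (\<lambda>t. (f1 t, f2 t))) has_derivative (DG \<circ> (\<lambda>h. h *\<^sub>R (d1, d2)))) (at x)"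
    using has_derivative_compose[OF P', of G DG] G by (simp add: o_def)
  moreover have "DG \<circ> (\<lambda>h. h *\<^sub>R (d1, d2)) = (\<lambda>h. h *\<^sub>R (d1 *\<^sub>R DG (1,0) + d2 *\<^sub>R DG (0,1)))"
  proof
    fix h :: real
    have lin: "linear DG" using G has_derivative_linear by blast
    have e: "(d1, d2) = d1 *\<^sub>R (1::real,0::real) + d2 *\<^sub>R (0,1)" by simp
    have "DG (h *\<^sub>R (d1, d2)) = h *\<^sub>R DG (d1, d2)" by (rule linear_scale[OF lin])
    also have "DG (d1, d2) = DG (d1 *\<^sub>R (1::real,0::real)) + DG (d2 *\<^sub>R (0,1))"
      unfolding e by (rule linear_add[OF lin])
    also have "\<dots> = d1 *\<^sub>R DG (1,0) + d2 *\<^sub>R DG (0,1)"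
      by (simp only: linear_scale[OF lin])
    finally have "DG (h *\<^sub>R (d1, d2)) = h *\<^sub>R (d1 *\<^sub>R DG (1,0) + d2 *\<^sub>R DG (0,1))" .
    then show "(DG \<circ> (\<lambda>h. h *\<^sub>R (d1, d2))) h = h *\<^sub>R (d1 *\<^sub>R DG (1,0) + d2 *\<^sub>R DG (0,1))" by simp
  qed
  ultimately show ?thesis by (simp add: has_vector_derivative_def o_def)
qed

lemma Ck_on_comp:
  fixes G :: "real \<times> real \<Rightarrow> 'a::real_normed_vector" and \<alpha> \<beta> :: "real \<times> real \<Rightarrow> real"
  assumes U: "open U" and V: "open V"
  shows "Ck_on k U G \<Longrightarrow> Ck_on k V \<alpha> \<Longrightarrow> Ck_on k V \<beta> \<Longrightarrow> (\<And>q. q \<in> V \<Longrightarrow> (\<alpha> q, \<beta> q) \<in> U)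
         \<Longrightarrow> Ck_on k V (\<lambda>q. G (\<alpha> q, \<beta> q))"
proof (induction k arbitrary: G \<alpha> \<beta>)
  case 0
  have c: "continuous_on V (\<lambda>q. (\<alpha> q, \<beta> q))" using 0 by (auto intro: continuous_on_Pair)
  have "continuous_on V (\<lambda>q. G (\<alpha> q, \<beta> q))"
    by (rule continuous_on_compose2[OF _ c, of U G]) (use 0 in auto)
  then show ?case by simp
next
  case (Suc k)
  note dG = Ck_on_SucD[OF Suc.prems(1)] and da = Ck_on_SucD[OF Suc.prems(2)]
    and db = Ck_on_SucD[OF Suc.prems(3)]
  have fu: "pd_u \<alpha> q *\<^sub>R pd_u G (\<alpha> q, \<beta> q) + pd_u \<beta> q *\<^sub>R pd_v G (\<alpha> q, \<beta> q)
            = pd_u (\<lambda>q. G (\<alpha> q, \<beta> q)) q" if qV: "q \<in> V" for q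
  proof -
    obtain DG where DG: "(G has_derivative DG) (at (\<alpha> q, \<beta> q))"
      using dG(1)[OF Suc.prems(4)[OF qV]] unfolding differentiable_def by blast
    have "((\<lambda>t. G (\<alpha> (t, snd q), \<beta> (t, snd q))) has_vector_derivative
           (pd_u \<alpha> q *\<^sub>R DG (1,0) + pd_u \<beta> q *\<^sub>R DG (0,1))) (at (fst q))"
      by (rule chain_vd) (use DG pd_u_real da(1)[OF qV] db(1)[OF qV] in auto)
    from pd_u_from[where h="\<lambda>q. G (\<alpha> q, \<beta> q)", OF this] show ?thesis
      using pd_u_eq[OF DG] pd_v_eq[OF DG] by simp
  qed
  have fv: "pd_v \<alpha> q *\<^sub>R pd_u G (\<alpha> q, \<beta> q) + pd_v \<beta> q *\<^sub>R pd_v G (\<alpha> q, \<beta> q)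
            = pd_v (\<lambda>q. G (\<alpha> q, \<beta> q)) q" if qV: "q \<in> V" for q
  proof -
    obtain DG where DG: "(G has_derivative DG) (at (\<alpha> q, \<beta> q))"
      using dG(1)[OF Suc.prems(4)[OF qV]] unfolding differentiable_def by blast
    have "((\<lambda>t. G (\<alpha> (fst q, t), \<beta> (fst q, t))) has_vector_derivative
           (pd_v \<alpha> q *\<^sub>R DG (1,0) + pd_v \<beta> q *\<^sub>R DG (0,1))) (at (snd q))"
      by (rule chain_vd) (use DG pd_v_real da(1)[OF qV] db(1)[OF qV] in auto)
    from pd_v_from[where h="\<lambda>q. G (\<alpha> q, \<beta> q)", OF this] show ?thesis
      using pd_u_eq[OF DG] pd_v_eq[OF DG] by simp
  qed
  have IHu: "Ck_on k V (\<lambda>q. pd_u G (\<alpha> q, \<beta> q))"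
    by (rule Suc.IH[OF dG(2) da(4) db(4) Suc.prems(4)])
  have IHv: "Ck_on k V (\<lambda>q. pd_v G (\<alpha> q, \<beta> q))"
    by (rule Suc.IH[OF dG(3) da(4) db(4) Suc.prems(4)])
  show ?case
  proof (rule Ck_on_SucI)
    show "(\<lambda>q. G (\<alpha> q, \<beta> q)) differentiable (at p)" if pV: "p \<in> V" for p
    proof (rule differentiable_compose[of G])
      show "G differentiable (at (\<alpha> p, \<beta> p))" using dG(1)[OF Suc.prems(4)[OF pV]] .
      show "(\<lambda>q. (\<alpha> q, \<beta> q)) differentiable (at p)"
        using da(1)[OF pV] db(1)[OF pV] by (rule differentiable_Pair)
    qed
    show "Ck_on k V (pd_u (\<lambda>q. G (\<alpha> q, \<beta> q)))"
      by (rule Ck_on_cong[OF V fu Ck_on_add[OF V Ck_on_scaleR[OF V da(2) IHu] Ck_on_scaleR[OF V db(2) IHv]]])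
    show "Ck_on k V (pd_v (\<lambda>q. G (\<alpha> q, \<beta> q)))"
      by (rule Ck_on_cong[OF V fv Ck_on_add[OF V Ck_on_scaleR[OF V da(3) IHu] Ck_on_scaleR[OF V db(3) IHv]]])
  qed
qed

lemma Ck_on_fst: "Ck_on k U (fst :: real \<times> real \<Rightarrow> real)"
proof (cases k)
  case 0 then show ?thesis by (simp add: continuous_on_fst continuous_on_id)
next
  case (Suc m)
  have "pd_u fst = (\<lambda>p::real\<times>real. 1::real)" "pd_v fst = (\<lambda>p::real\<times>real. 0::real)"
    unfolding pd_u_def pd_v_def by auto
  then show ?thesis using Suc Ck_on_const[of m U "1::real"] Ck_on_const[of m U "0::real"]
    by (simp add: bounded_linear_fst bounded_linear_imp_differentiable)
qed

lemma Ck_on_snd: "Ck_on k U (snd :: real \<times> real \<Rightarrow> real)"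
proof (cases k)
  case 0 then show ?thesis by (simp add: continuous_on_snd continuous_on_id)
next
  case (Suc m)
  have "pd_u snd = (\<lambda>p::real\<times>real. 0::real)" "pd_v snd = (\<lambda>p::real\<times>real. 1::real)"
    unfolding pd_u_def pd_v_def by auto
  then show ?thesis using Suc Ck_on_const[of m U "1::real"] Ck_on_const[of m U "0::real"]
    by (simp add: bounded_linear_snd bounded_linear_imp_differentiable)
qed

lemma sm_const: "smooth_on2 U (\<lambda>p. c)" unfolding smooth_on2_def by (intro allI Ck_on_const)
lemma sm_fst: "smooth_on2 U (fst :: real \<times> real \<Rightarrow> real)" unfolding smooth_on2_def by (intro allI Ck_on_fst)
lemma sm_snd: "smooth_on2 U (snd :: real \<times> real \<Rightarrow> real)" unfolding smooth_on2_def by (intro allI Ck_on_snd)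
lemma sm_add: "open U \<Longrightarrow> smooth_on2 U a \<Longrightarrow> smooth_on2 U b \<Longrightarrow> smooth_on2 U (\<lambda>p. a p + b p)"
  unfolding smooth_on2_def by (intro allI Ck_on_add) auto
lemma sm_minus: "open U \<Longrightarrow> smooth_on2 U a \<Longrightarrow> smooth_on2 U b \<Longrightarrow> smooth_on2 U (\<lambda>p. a p - b p)"
  unfolding smooth_on2_def by (intro allI Ck_on_diff) auto
lemma sm_uminus: "open U \<Longrightarrow> smooth_on2 U a \<Longrightarrow> smooth_on2 U (\<lambda>p. - a p)"
  unfolding smooth_on2_def by (intro allI Ck_on_uminus) auto
lemma sm_scaleR: "open U \<Longrightarrow> smooth_on2 U a \<Longrightarrow> smooth_on2 U b \<Longrightarrow> smooth_on2 U (\<lambda>p. a p *\<^sub>R b p)"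
  unfolding smooth_on2_def by (intro allI Ck_on_scaleR) auto
lemma sm_mult: "open U \<Longrightarrow> smooth_on2 U a \<Longrightarrow> smooth_on2 U b \<Longrightarrow> smooth_on2 U (\<lambda>p. a p * b p :: real)"
  unfolding smooth_on2_def by (intro allI Ck_on_mult) auto
lemma sm_inner: "open U \<Longrightarrow> smooth_on2 U a \<Longrightarrow> smooth_on2 U b \<Longrightarrow> smooth_on2 U (\<lambda>p. a p \<bullet> b p)"
  unfolding smooth_on2_def by (intro allI Ck_on_inner) auto
lemma sm_cross: "open U \<Longrightarrow> smooth_on2 U a \<Longrightarrow> smooth_on2 U b \<Longrightarrow> smooth_on2 U (\<lambda>p. cross3 (a p) (b p))"
  unfolding smooth_on2_def by (intro allI Ck_on_cross) auto
lemma sm_inverse: "open U \<Longrightarrow> smooth_on2 U a \<Longrightarrow> (\<And>p. p \<in> U \<Longrightarrow> a p \<noteq> (0::real)) \<Longrightarrow> smooth_on2 U (\<lambda>p. inverse (a p))"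
  unfolding smooth_on2_def by (intro allI Ck_on_inverse) auto
lemma sm_sqrt: "open U \<Longrightarrow> smooth_on2 U a \<Longrightarrow> (\<And>p. p \<in> U \<Longrightarrow> a p > (0::real)) \<Longrightarrow> smooth_on2 U (\<lambda>p. sqrt (a p))"
  unfolding smooth_on2_def by (intro allI Ck_on_sqrt) auto
lemma sm_comp: "open U \<Longrightarrow> open V \<Longrightarrow> smooth_on2 U G \<Longrightarrow> smooth_on2 V \<alpha> \<Longrightarrow> smooth_on2 V \<beta> \<Longrightarrow>
   (\<And>q. q \<in> V \<Longrightarrow> (\<alpha> q, \<beta> q) \<in> U) \<Longrightarrow> smooth_on2 V (\<lambda>q. G (\<alpha> q, \<beta> q))"
  unfolding smooth_on2_def proof
  fix k assume a: "open U" "open V" "\<forall>k. Ck_on k U G" "\<forall>k. Ck_on k V \<alpha>" "\<forall>k. Ck_on k V \<beta>"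
    "\<And>q. q \<in> V \<Longrightarrow> (\<alpha> q, \<beta> q) \<in> U"
  show "Ck_on k V (\<lambda>q. G (\<alpha> q, \<beta> q))"
    by (rule Ck_on_comp[OF a(1,2) a(3)[rule_format] a(4)[rule_format] a(5)[rule_format] a(6)])
qed
lemma sm_cong: "open U \<Longrightarrow> (\<And>q. q \<in> U \<Longrightarrow> h q = h' q) \<Longrightarrow> smooth_on2 U h \<Longrightarrow> smooth_on2 U h'"
  unfolding smooth_on2_def proof
  fix k assume a: "open U" "\<And>q. q \<in> U \<Longrightarrow> h q = h' q" "\<forall>k. Ck_on k U h"
  show "Ck_on k U h'" by (rule Ck_on_cong[OF a(1,2) a(3)[rule_format]])
qed
lemma sm_divide: "open U \<Longrightarrow> smooth_on2 U a \<Longrightarrow> smooth_on2 U b \<Longrightarrow> (\<And>p. p \<in> U \<Longrightarrow> b p \<noteq> (0::real)) \<Longrightarrow> smooth_on2 U (\<lambda>p. a p / b p)"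
  using sm_mult[of U a "\<lambda>p. inverse (b p)"] sm_inverse[of U b] by (simp add: divide_inverse)


lemma hd_u: "h differentiable (at (r,b)) \<Longrightarrow>
  ((\<lambda>t. h (t, b) \<bullet> w) has_real_derivative (pd_u h (r,b) \<bullet> w)) (at r)"
proof -
  assume "h differentiable (at (r,b))"
  from pd_u_works[OF this] have "((\<lambda>t. h (t, b)) has_vector_derivative pd_u h (r,b)) (at r)" by simp
  from bounded_linear.has_vector_derivative[OF bounded_linear_inner_left this, of w]
  show ?thesis by (simp add: has_real_derivative_iff_has_vector_derivative)
qed

lemma hd_v: "h differentiable (at (a,r)) \<Longrightarrow>
  ((\<lambda>t. h (a, t) \<bullet> w) has_real_derivative (pd_v h (a,r) \<bullet> w)) (at r)"
proof -
  assume "h differentiable (at (a,r))"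
  from pd_v_works[OF this] have "((\<lambda>t. h (a, t)) has_vector_derivative pd_v h (a,r)) (at r)" by simp
  from bounded_linear.has_vector_derivative[OF bounded_linear_inner_left this, of w]
  show ?thesis by (simp add: has_real_derivative_iff_has_vector_derivative)
qed

lemma schwarz:
  fixes h :: "real \<times> real \<Rightarrow> 'a::real_inner"
  assumes U: "open U" and pU: "p \<in> U"
    and d0: "\<And>q. q\<in>U \<Longrightarrow> h differentiable (at q)"
    and du: "\<And>q. q\<in>U \<Longrightarrow> pd_u h differentiable (at q)"
    and dv: "\<And>q. q\<in>U \<Longrightarrow> pd_v h differentiable (at q)"
    and c1: "continuous_on U (pd_v (pd_u h))" and c2: "continuous_on U (pd_u (pd_v h))"
  shows "pd_v (pd_u h) p = pd_u (pd_v h) p"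
proof (rule ccontr)
  obtain u0 v0 where p: "p = (u0,v0)" by (cases p)
  define A where "A = pd_v (pd_u h) p"
  define B where "B = pd_u (pd_v h) p"
  assume "pd_v (pd_u h) p \<noteq> pd_u (pd_v h) p"
  then have ne: "A \<noteq> B" by (simp add: A_def B_def)
  define w where "w = A - B"
  define e where "e = norm w / 2"
  have e: "e > 0" using ne by (simp add: e_def w_def)
  obtain d1 where d1: "d1 > 0" "\<And>q. q\<in>U \<Longrightarrow> dist q p < d1 \<Longrightarrow> dist (pd_v (pd_u h) q) A < e"
    using c1 pU e unfolding continuous_on_iff A_def by metis
  obtain d2 where d2: "d2 > 0" "\<And>q. q\<in>U \<Longrightarrow> dist q p < d2 \<Longrightarrow> dist (pd_u (pd_v h) q) B < e"
    using c2 pU e unfolding continuous_on_iff B_def by metis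
  obtain d3 where d3: "d3 > 0" "ball p d3 \<subseteq> U" using U pU open_contains_ball by blast
  define s where "s = min d1 (min d2 d3) / 3"
  have s: "s > 0" using d1 d2 d3 by (simp add: s_def)
  have box: "(a,b) \<in> U \<and> dist (a,b) p < d1 \<and> dist (a,b) p < d2"
    if "u0 \<le> a" "a \<le> u0 + s" "v0 \<le> b" "b \<le> v0 + s" for a b
  proof -
    have "dist (a,b) p = norm (a - u0, b - v0)" by (simp add: p dist_norm)
    also have "\<dots> \<le> norm (a - u0) + norm (b - v0)" by (rule norm_Pair_le)
    also have "\<dots> \<le> 2 * s" using that by simp
    also have "\<dots> < min d1 (min d2 d3)"
    proof -
      have m: "0 < min d1 (min d2 d3)" using d1(1) d2(1) d3(1) by simp
      then show ?thesis unfolding s_def by linarith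
    qed
    finally have "dist (a,b) p < min d1 (min d2 d3)" .
    then show ?thesis using d3 by (auto simp: dist_commute)
  qed
  define \<Delta> where "\<Delta> = (h (u0+s, v0+s) - h (u0+s, v0) - h (u0, v0+s) + h (u0, v0)) \<bullet> w"
  obtain \<xi> where xi: "u0 < \<xi>" "\<xi> < u0 + s" and
     eq1: "(h (u0+s, v0+s) - h (u0+s, v0)) \<bullet> w - (h (u0, v0+s) - h (u0, v0)) \<bullet> w
        = (u0 + s - u0) * ((pd_u h (\<xi>, v0+s) - pd_u h (\<xi>, v0)) \<bullet> w)"
  proof -
    have "\<exists>z. u0 < z \<and> z < u0 + s \<and>
      ((\<lambda>r. (h (r, v0+s) - h (r, v0)) \<bullet> w) (u0 + s) - (\<lambda>r. (h (r, v0+s) - h (r, v0)) \<bullet> w) u0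
        = (u0 + s - u0) * ((\<lambda>r. (pd_u h (r, v0+s) - pd_u h (r, v0)) \<bullet> w) z))"
    proof (rule MVT2)
      show "u0 < u0 + s" using s by simp
      fix r assume r: "u0 \<le> r" "r \<le> u0 + s"
      have "((\<lambda>t. h (t, v0+s) \<bullet> w - h (t, v0) \<bullet> w) has_real_derivative
             (pd_u h (r, v0+s) \<bullet> w - pd_u h (r, v0) \<bullet> w)) (at r)"
        by (intro DERIV_diff hd_u d0) (use box r s in auto)
      then show "((\<lambda>r. (h (r, v0+s) - h (r, v0)) \<bullet> w) has_real_derivative
             (\<lambda>r. (pd_u h (r, v0+s) - pd_u h (r, v0)) \<bullet> w) r) (at r)"
        by (simp add: inner_diff_left)
    qed
    then show ?thesis using that by auto
  qed
  obtain \<eta> where eta: "v0 < \<eta>" "\<eta> < v0 + s" and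
     eq2: "pd_u h (\<xi>, v0+s) \<bullet> w - pd_u h (\<xi>, v0) \<bullet> w = (v0 + s - v0) * (pd_v (pd_u h) (\<xi>, \<eta>) \<bullet> w)"
  proof -
    have "\<exists>z. v0 < z \<and> z < v0 + s \<and>
      ((\<lambda>r. pd_u h (\<xi>, r) \<bullet> w) (v0 + s) - (\<lambda>r. pd_u h (\<xi>, r) \<bullet> w) v0
        = (v0 + s - v0) * ((\<lambda>r. pd_v (pd_u h) (\<xi>, r) \<bullet> w) z))"
    proof (rule MVT2)
      show "v0 < v0 + s" using s by simp
      fix r assume r: "v0 \<le> r" "r \<le> v0 + s"
      show "((\<lambda>r. pd_u h (\<xi>, r) \<bullet> w) has_real_derivative (\<lambda>r. pd_v (pd_u h) (\<xi>, r) \<bullet> w) r) (at r)"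
        by (rule hd_v, rule du) (use box r xi in auto)
    qed
    then show ?thesis using that by auto
  qed
  have D1: "\<Delta> = s * s * (pd_v (pd_u h) (\<xi>, \<eta>) \<bullet> w)"
    using eq1 eq2 by (simp add: \<Delta>_def inner_diff_left inner_add_left algebra_simps)
  obtain \<eta>' where eta': "v0 < \<eta>'" "\<eta>' < v0 + s" and
     eq3: "(h (u0+s, v0+s) - h (u0, v0+s)) \<bullet> w - (h (u0+s, v0) - h (u0, v0)) \<bullet> w
        = (v0 + s - v0) * ((pd_v h (u0+s, \<eta>') - pd_v h (u0, \<eta>')) \<bullet> w)"
  proof -
    have "\<exists>z. v0 < z \<and> z < v0 + s \<and>
      ((\<lambda>r. (h (u0+s, r) - h (u0, r)) \<bullet> w) (v0 + s) - (\<lambda>r. (h (u0+s, r) - h (u0, r)) \<bullet> w) v0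
        = (v0 + s - v0) * ((\<lambda>r. (pd_v h (u0+s, r) - pd_v h (u0, r)) \<bullet> w) z))"
    proof (rule MVT2)
      show "v0 < v0 + s" using s by simp
      fix r assume r: "v0 \<le> r" "r \<le> v0 + s"
      have "((\<lambda>t. h (u0+s, t) \<bullet> w - h (u0, t) \<bullet> w) has_real_derivative
             (pd_v h (u0+s, r) \<bullet> w - pd_v h (u0, r) \<bullet> w)) (at r)"
        by (intro DERIV_diff hd_v d0) (use box r s in auto)
      then show "((\<lambda>r. (h (u0+s, r) - h (u0, r)) \<bullet> w) has_real_derivative
             (\<lambda>r. (pd_v h (u0+s, r) - pd_v h (u0, r)) \<bullet> w) r) (at r)"
        by (simp add: inner_diff_left)
    qed
    then show ?thesis using that by auto
  qed
  obtain \<xi>' where xi': "u0 < \<xi>'" "\<xi>' < u0 + s" and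
     eq4: "pd_v h (u0+s, \<eta>') \<bullet> w - pd_v h (u0, \<eta>') \<bullet> w = (u0 + s - u0) * (pd_u (pd_v h) (\<xi>', \<eta>') \<bullet> w)"
  proof -
    have "\<exists>z. u0 < z \<and> z < u0 + s \<and>
      ((\<lambda>r. pd_v h (r, \<eta>') \<bullet> w) (u0 + s) - (\<lambda>r. pd_v h (r, \<eta>') \<bullet> w) u0
        = (u0 + s - u0) * ((\<lambda>r. pd_u (pd_v h) (r, \<eta>') \<bullet> w) z))"
    proof (rule MVT2)
      show "u0 < u0 + s" using s by simp
      fix r assume r: "u0 \<le> r" "r \<le> u0 + s"
      show "((\<lambda>r. pd_v h (r, \<eta>') \<bullet> w) has_real_derivative (\<lambda>r. pd_u (pd_v h) (r, \<eta>') \<bullet> w) r) (at r)"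
        by (rule hd_u, rule dv) (use box r eta' in auto)
    qed
    then show ?thesis using that by auto
  qed
  have D2: "\<Delta> = s * s * (pd_u (pd_v h) (\<xi>', \<eta>') \<bullet> w)"
    using eq3 eq4 by (simp add: \<Delta>_def inner_diff_left inner_add_left algebra_simps)
  have eqw: "pd_v (pd_u h) (\<xi>, \<eta>) \<bullet> w = pd_u (pd_v h) (\<xi>', \<eta>') \<bullet> w"
    using D1 D2 s by simp
  define a where "a = pd_v (pd_u h) (\<xi>, \<eta>) - A"
  define b where "b = pd_u (pd_v h) (\<xi>', \<eta>') - B"
  have na: "norm a < e" using d1(2)[of "(\<xi>, \<eta>)"] box[of \<xi> \<eta>] xi eta
    by (simp add: a_def dist_norm)
  have nb: "norm b < e" using d2(2)[of "(\<xi>', \<eta>')"] box[of \<xi>' \<eta>'] xi' eta'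
    by (simp add: b_def dist_norm)
  have "0 = (w + a - b) \<bullet> w" using eqw by (simp add: a_def b_def w_def inner_diff_left)
  also have "\<dots> = norm w ^ 2 + (a - b) \<bullet> w" by (simp add: inner_diff_left inner_add_left power2_norm_eq_inner)
  also have "\<dots> \<ge> norm w ^ 2 - norm (a - b) * norm w"
    using Cauchy_Schwarz_ineq2[of "a - b" w] by (simp add: abs_le_iff)
  finally have "norm (a - b) * norm w \<ge> norm w ^ 2" by simp
  moreover have "norm (a - b) < norm w"
    using norm_triangle_ineq4[of a b] na nb by (simp add: e_def)
  moreover have "norm w > 0" using ne by (simp add: w_def)
  ultimately show False by (simp add: power2_eq_square)
qed


lemma schwarz_smooth:
  fixes h :: "real \<times> real \<Rightarrow> 'a::real_inner"
  assumes "open U" "smooth_on2 U h" "p \<in> U"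
  shows "pd_v (pd_u h) p = pd_u (pd_v h) p"
  by (rule schwarz[OF assms(1,3)])
     (use assms(2) smooth_diff smooth_pd_u smooth_pd_v smooth_cont in blast)+

lemma pd_u_inner:
  assumes "a differentiable (at p)" "b differentiable (at p)"
  shows "pd_u (\<lambda>q. a q \<bullet> b q) p = pd_u a p \<bullet> b p + a p \<bullet> pd_u b p"
proof -
  have "((\<lambda>t. a (t, snd p) \<bullet> b (t, snd p)) has_vector_derivative
     a (fst p, snd p) \<bullet> pd_u b p + pd_u a p \<bullet> b (fst p, snd p)) (at (fst p))"
    by (rule bounded_bilinear.has_vector_derivative[OF bounded_bilinear_inner pd_u_works pd_u_works])
       (use assms in auto)
  from pd_u_from[where h="\<lambda>q. a q \<bullet> b q", OF this] show ?thesis by simp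
qed

lemma pd_v_inner:
  assumes "a differentiable (at p)" "b differentiable (at p)"
  shows "pd_v (\<lambda>q. a q \<bullet> b q) p = pd_v a p \<bullet> b p + a p \<bullet> pd_v b p"
proof -
  have "((\<lambda>t. a (fst p, t) \<bullet> b (fst p, t)) has_vector_derivative
     a (fst p, snd p) \<bullet> pd_v b p + pd_v a p \<bullet> b (fst p, snd p)) (at (snd p))"
    by (rule bounded_bilinear.has_vector_derivative[OF bounded_bilinear_inner pd_v_works pd_v_works])
       (use assms in auto)
  from pd_v_from[where h="\<lambda>q. a q \<bullet> b q", OF this] show ?thesis by simp
qed

lemma pd_u_zero:
  assumes "open U" "p \<in> U" "\<And>q. q \<in> U \<Longrightarrow> f q = c"
  shows "pd_u f p = 0"
proof -
  have "pd_u f p = pd_u (\<lambda>q. c) p" by (rule pd_u_cong[OF assms(1,2)]) (use assms(3) in auto)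
  then show ?thesis by (simp add: pd_u_def)
qed

lemma pd_v_zero:
  assumes "open U" "p \<in> U" "\<And>q. q \<in> U \<Longrightarrow> f q = c"
  shows "pd_v f p = 0"
proof -
  have "pd_v f p = pd_v (\<lambda>q. c) p" by (rule pd_v_cong[OF assms(1,2)]) (use assms(3) in auto)
  then show ?thesis by (simp add: pd_v_def)
qed

lemma cross_cross_left: "cross3 (cross3 a b) v = (a \<bullet> v) *\<^sub>R b - (b \<bullet> v) *\<^sub>R a"
  by (simp add: cross3_simps forall_3)

lemma perp3_zero:
  fixes a b v :: "real^3"
  assumes "cross3 a b \<noteq> 0" "v \<bullet> a = 0" "v \<bullet> b = 0" "v \<bullet> cross3 a b = 0"
  shows "v = 0"
proof -
  have "cross3 (cross3 a b) v = 0" using assms by (simp add: cross_cross_left inner_commute)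
  then have "(norm (cross3 a b) * norm v)\<^sup>2 = 0"
    using norm_cross_dot[of "cross3 a b" v] assms(4) by (simp add: inner_commute)
  then show ?thesis using assms(1) by simp
qed

lemma basis3:
  fixes a b v w :: "real^3"
  defines "n \<equiv> (1 / norm (cross3 a b)) *\<^sub>R cross3 a b"
  assumes c: "cross3 a b \<noteq> 0" and ab: "a \<bullet> b = 0"
  shows "v \<bullet> w = (v \<bullet> a) * (w \<bullet> a) / (a \<bullet> a) + (v \<bullet> b) * (w \<bullet> b) / (b \<bullet> b) + (v \<bullet> n) * (w \<bullet> n)"
proof -
  have a0: "a \<noteq> 0" and b0: "b \<noteq> 0" using c by auto
  have aa: "a \<bullet> a \<noteq> 0" and bb: "b \<bullet> b \<noteq> 0" using a0 b0 by auto
  have na: "n \<bullet> a = 0" and nb: "n \<bullet> b = 0" unfolding n_def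
    by (simp_all add: dot_cross_self inner_commute)
  have nn: "n \<bullet> n = 1" unfolding n_def using c
    by (simp add: power2_norm_eq_inner[symmetric] power2_eq_square)
  define r where "r = v - ((v \<bullet> a) / (a \<bullet> a)) *\<^sub>R a - ((v \<bullet> b) / (b \<bullet> b)) *\<^sub>R b - (v \<bullet> n) *\<^sub>R n"
  have ba: "b \<bullet> a = 0" using ab by (simp add: inner_commute)
  have an: "a \<bullet> n = 0" and bn: "b \<bullet> n = 0" using na nb by (simp_all add: inner_commute)
  have ra: "r \<bullet> a = 0" unfolding r_def inner_diff_left inner_scaleR_left using aa ba na by simp
  have rb: "r \<bullet> b = 0" unfolding r_def inner_diff_left inner_scaleR_left using bb ab nb by simp
  have rn: "r \<bullet> n = 0" unfolding r_def inner_diff_left inner_scaleR_left using nn an bn by simp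
  have "cross3 a b = norm (cross3 a b) *\<^sub>R n" unfolding n_def using c by simp
  then have rc: "r \<bullet> cross3 a b = 0" using rn by (metis inner_scaleR_right mult_zero_right)
  have "r = 0" by (rule perp3_zero[OF c ra rb rc])
  then have "v = ((v \<bullet> a) / (a \<bullet> a)) *\<^sub>R a + ((v \<bullet> b) / (b \<bullet> b)) *\<^sub>R b + (v \<bullet> n) *\<^sub>R n"
    unfolding r_def by (simp add: algebra_simps)
  then have "v \<bullet> w = (((v \<bullet> a) / (a \<bullet> a)) *\<^sub>R a + ((v \<bullet> b) / (b \<bullet> b)) *\<^sub>R b + (v \<bullet> n) *\<^sub>R n) \<bullet> w"
    by simp
  also have "\<dots> = (v \<bullet> a) / (a \<bullet> a) * (a \<bullet> w) + (v \<bullet> b) / (b \<bullet> b) * (b \<bullet> w) + (v \<bullet> n) * (n \<bullet> w)"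
    unfolding inner_add_left inner_scaleR_left by simp
  finally show ?thesis by (simp add: inner_commute)
qed


locale psurf =
  fixes U :: "(real \<times> real) set" and x :: surf
  assumes pp: "principal_param U x"
begin

abbreviation "xu \<equiv> pd_u x"
abbreviation "xv \<equiv> pd_v x"
abbreviation "xuu \<equiv> pd_u (pd_u x)"
abbreviation "xuv \<equiv> pd_v (pd_u x)"
abbreviation "xvv \<equiv> pd_v (pd_v x)"
abbreviation "nN \<equiv> unit_normal x"

lemma U: "open U" using pp unfolding principal_param_def by blast
lemma sx: "smooth_on2 U x" using pp unfolding principal_param_def by blast
lemma cr: "p \<in> U \<Longrightarrow> cross3 (xu p) (xv p) \<noteq> 0" using pp unfolding principal_param_def by blast
lemma F0: "p \<in> U \<Longrightarrow> xu p \<bullet> xv p = 0" using pp unfolding principal_param_def fF_def by blast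
lemma M0: "p \<in> U \<Longrightarrow> xuv p \<bullet> nN p = 0" using pp unfolding principal_param_def fM_def by blast

lemma sxu: "smooth_on2 U xu" by (rule smooth_pd_u[OF sx])
lemma sxv: "smooth_on2 U xv" by (rule smooth_pd_v[OF sx])
lemma sxuu: "smooth_on2 U xuu" by (rule smooth_pd_u[OF sxu])
lemma sxuv: "smooth_on2 U xuv" by (rule smooth_pd_v[OF sxu])
lemma sxvv: "smooth_on2 U xvv" by (rule smooth_pd_v[OF sxv])

lemma sym_x: "p \<in> U \<Longrightarrow> pd_u xv p = xuv p"
  using schwarz_smooth[OF U sx] by simp

lemma cross_sm: "smooth_on2 U (\<lambda>p. cross3 (xu p) (xv p))"
  by (rule sm_cross[OF U sxu sxv])

lemma nN_eq: "nN p = inverse (sqrt (cross3 (xu p) (xv p) \<bullet> cross3 (xu p) (xv p))) *\<^sub>R cross3 (xu p) (xv p)"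
  unfolding unit_normal_def by (simp add: norm_eq_sqrt_inner divide_inverse)

lemma sN: "smooth_on2 U nN"
proof -
  have a: "smooth_on2 U (\<lambda>p. cross3 (xu p) (xv p) \<bullet> cross3 (xu p) (xv p))"
    by (rule sm_inner[OF U cross_sm cross_sm])
  have b: "smooth_on2 U (\<lambda>p. inverse (sqrt (cross3 (xu p) (xv p) \<bullet> cross3 (xu p) (xv p))))"
    by (rule sm_inverse[OF U sm_sqrt[OF U a]]) (use cr in auto)
  show ?thesis
    by (rule sm_cong[OF U _ sm_scaleR[OF U b cross_sm]]) (simp add: nN_eq)
qed

lemma fE_eq: "fE x = (\<lambda>p. xu p \<bullet> xu p)" by (simp add: fE_def fun_eq_iff)
lemma fG_eq: "fG x = (\<lambda>p. xv p \<bullet> xv p)" by (simp add: fG_def fun_eq_iff)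
lemma fL_eq: "fL x = (\<lambda>p. xuu p \<bullet> nN p)" by (simp add: fL_def fun_eq_iff)
lemma fN_eq: "fN x = (\<lambda>p. xvv p \<bullet> nN p)" by (simp add: fN_def fun_eq_iff)

lemma sE: "smooth_on2 U (fE x)" unfolding fE_eq by (rule sm_inner[OF U sxu sxu])
lemma sG: "smooth_on2 U (fG x)" unfolding fG_eq by (rule sm_inner[OF U sxv sxv])
lemma sL: "smooth_on2 U (fL x)" unfolding fL_eq by (rule sm_inner[OF U sxuu sN])
lemma sNN: "smooth_on2 U (fN x)" unfolding fN_eq by (rule sm_inner[OF U sxvv sN])

lemma Epos: "p \<in> U \<Longrightarrow> fE x p > 0"
  using cr[of p] by (auto simp: fE_def)
lemma Gpos: "p \<in> U \<Longrightarrow> fG x p > 0"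
  using cr[of p] by (auto simp: fG_def)

lemma N_xu: "p \<in> U \<Longrightarrow> nN p \<bullet> xu p = 0"
  unfolding unit_normal_def by (simp add: dot_cross_self)
lemma N_xv: "p \<in> U \<Longrightarrow> nN p \<bullet> xv p = 0"
  unfolding unit_normal_def by (simp add: dot_cross_self)
lemma N_N: "p \<in> U \<Longrightarrow> nN p \<bullet> nN p = 1"
  using cr[of p] unfolding unit_normal_def
  by (simp add: power2_norm_eq_inner[symmetric] power2_eq_square)

lemma dN: "p \<in> U \<Longrightarrow> nN differentiable (at p)" using smooth_diff[OF sN] .
lemma dxu: "p \<in> U \<Longrightarrow> xu differentiable (at p)" using smooth_diff[OF sxu] .
lemma dxv: "p \<in> U \<Longrightarrow> xv differentiable (at p)" using smooth_diff[OF sxv] .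
lemma dxuu: "p \<in> U \<Longrightarrow> xuu differentiable (at p)" using smooth_diff[OF sxuu] .
lemma dxuv: "p \<in> U \<Longrightarrow> xuv differentiable (at p)" using smooth_diff[OF sxuv] .
lemma dxvv: "p \<in> U \<Longrightarrow> xvv differentiable (at p)" using smooth_diff[OF sxvv] .

lemma Nu_xu: assumes "p \<in> U" shows "pd_u nN p \<bullet> xu p = - fL x p"
proof -
  have "pd_u (\<lambda>q. nN q \<bullet> xu q) p = 0" by (rule pd_u_zero[OF U assms N_xu])
  then show ?thesis using pd_u_inner[OF dN[OF assms] dxu[OF assms]] by (simp add: fL_def inner_commute)
qed

lemma Nu_xv: assumes "p \<in> U" shows "pd_u nN p \<bullet> xv p = 0"
proof -
  have "pd_u (\<lambda>q. nN q \<bullet> xv q) p = 0" by (rule pd_u_zero[OF U assms N_xv])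
  then show ?thesis using pd_u_inner[OF dN[OF assms] dxv[OF assms]] sym_x[OF assms] M0[OF assms]
    by (simp add: inner_commute)
qed

lemma Nu_N: assumes "p \<in> U" shows "pd_u nN p \<bullet> nN p = 0"
proof -
  have "pd_u (\<lambda>q. nN q \<bullet> nN q) p = 0" by (rule pd_u_zero[OF U assms N_N])
  then show ?thesis using pd_u_inner[OF dN[OF assms] dN[OF assms]] by (simp add: inner_commute)
qed

lemma Nv_xu: assumes "p \<in> U" shows "pd_v nN p \<bullet> xu p = 0"
proof -
  have "pd_v (\<lambda>q. nN q \<bullet> xu q) p = 0" by (rule pd_v_zero[OF U assms N_xu])
  then show ?thesis using pd_v_inner[OF dN[OF assms] dxu[OF assms]] M0[OF assms]
    by (simp add: inner_commute)
qed

lemma Nv_xv: assumes "p \<in> U" shows "pd_v nN p \<bullet> xv p = - fN x p"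
proof -
  have "pd_v (\<lambda>q. nN q \<bullet> xv q) p = 0" by (rule pd_v_zero[OF U assms N_xv])
  then show ?thesis using pd_v_inner[OF dN[OF assms] dxv[OF assms]] by (simp add: fN_def inner_commute)
qed

lemma Nv_N: assumes "p \<in> U" shows "pd_v nN p \<bullet> nN p = 0"
proof -
  have "pd_v (\<lambda>q. nN q \<bullet> nN q) p = 0" by (rule pd_v_zero[OF U assms N_N])
  then show ?thesis using pd_v_inner[OF dN[OF assms] dN[OF assms]] by (simp add: inner_commute)
qed

lemma Ev: assumes "p \<in> U" shows "pd_v (fE x) p = 2 * (xuv p \<bullet> xu p)"
  unfolding fE_eq using pd_v_inner[OF dxu[OF assms] dxu[OF assms]] by (simp add: inner_commute)

lemma Gu: assumes "p \<in> U" shows "pd_u (fG x) p = 2 * (xuv p \<bullet> xv p)"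
  unfolding fG_eq using pd_u_inner[OF dxv[OF assms] dxv[OF assms]] sym_x[OF assms] by (simp add: inner_commute)

lemma xuu_xv: assumes "p \<in> U" shows "xuu p \<bullet> xv p = - (xuv p \<bullet> xu p)"
proof -
  have "pd_u (\<lambda>q. xu q \<bullet> xv q) p = 0" by (rule pd_u_zero[OF U assms F0])
  then show ?thesis using pd_u_inner[OF dxu[OF assms] dxv[OF assms]] sym_x[OF assms]
    by (simp add: inner_commute add_eq_0_iff)
qed

lemma xvv_xu: assumes "p \<in> U" shows "xvv p \<bullet> xu p = - (xuv p \<bullet> xv p)"
proof -
  have "pd_v (\<lambda>q. xu q \<bullet> xv q) p = 0" by (rule pd_v_zero[OF U assms F0])
  then show ?thesis using pd_v_inner[OF dxu[OF assms] dxv[OF assms]]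
    by (simp add: inner_commute add_eq_0_iff)
qed

lemma basis: assumes "p \<in> U"
  shows "v \<bullet> w = (v \<bullet> xu p) * (w \<bullet> xu p) / fE x p + (v \<bullet> xv p) * (w \<bullet> xv p) / fG x p
                  + (v \<bullet> nN p) * (w \<bullet> nN p)"
  using basis3[OF cr[OF assms] F0[OF assms], of v w] by (simp add: fE_def fG_def unit_normal_def)

lemma codazzi1: assumes pU: "p \<in> U"
  shows "pd_v (fL x) p = pd_v (fE x) p / 2 * (fL x p / fE x p + fN x p / fG x p)"
proof -
  have L1: "pd_v (fL x) p = pd_v xuu p \<bullet> nN p + xuu p \<bullet> pd_v nN p"
    unfolding fL_eq using pd_v_inner[OF dxuu[OF pU] dN[OF pU]] .
  have "pd_u (\<lambda>q. xuv q \<bullet> nN q) p = 0" by (rule pd_u_zero[OF U pU M0])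
  then have M1: "pd_u xuv p \<bullet> nN p + xuv p \<bullet> pd_u nN p = 0"
    using pd_u_inner[OF dxuv[OF pU] dN[OF pU]] by simp
  have sy: "pd_u xuv p = pd_v xuu p" using schwarz_smooth[OF U sxu pU] by simp
  have L2: "pd_v (fL x) p = - (xuv p \<bullet> pd_u nN p) + xuu p \<bullet> pd_v nN p"
    using L1 M1 sy by simp
  have b1: "xuv p \<bullet> pd_u nN p = (xuv p \<bullet> xu p) * (- fL x p) / fE x p"
    using basis[OF pU, of "xuv p" "pd_u nN p"] Nu_xu[OF pU] Nu_xv[OF pU] M0[OF pU]
    by (simp add: inner_commute)
  have b2: "xuu p \<bullet> pd_v nN p = (- (xuv p \<bullet> xu p)) * (- fN x p) / fG x p"
    using basis[OF pU, of "xuu p" "pd_v nN p"] Nv_xu[OF pU] Nv_xv[OF pU] Nv_N[OF pU] xuu_xv[OF pU]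
    by (simp add: inner_commute)
  show ?thesis using L2 b1 b2 Ev[OF pU] by (simp add: algebra_simps)
qed

lemma codazzi2: assumes pU: "p \<in> U"
  shows "pd_u (fN x) p = pd_u (fG x) p / 2 * (fL x p / fE x p + fN x p / fG x p)"
proof -
  have L1: "pd_u (fN x) p = pd_u xvv p \<bullet> nN p + xvv p \<bullet> pd_u nN p"
    unfolding fN_eq using pd_u_inner[OF dxvv[OF pU] dN[OF pU]] .
  have "pd_v (\<lambda>q. xuv q \<bullet> nN q) p = 0" by (rule pd_v_zero[OF U pU M0])
  then have M1: "pd_v xuv p \<bullet> nN p + xuv p \<bullet> pd_v nN p = 0"
    using pd_v_inner[OF dxuv[OF pU] dN[OF pU]] by simp
  have sy1: "pd_v (pd_u xv) p = pd_u xvv p" using schwarz_smooth[OF U sxv pU] by simp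
  have sy2: "pd_v (pd_u xv) p = pd_v xuv p" by (rule pd_v_cong[OF U pU sym_x])
  have L2: "pd_u (fN x) p = - (xuv p \<bullet> pd_v nN p) + xvv p \<bullet> pd_u nN p"
    using L1 M1 sy1 sy2 by simp
  have b1: "xuv p \<bullet> pd_v nN p = (xuv p \<bullet> xv p) * (- fN x p) / fG x p"
    using basis[OF pU, of "xuv p" "pd_v nN p"] Nv_xu[OF pU] Nv_xv[OF pU] M0[OF pU]
    by (simp add: inner_commute)
  have b2: "xvv p \<bullet> pd_u nN p = (- (xuv p \<bullet> xv p)) * (- fL x p) / fE x p"
    using basis[OF pU, of "xvv p" "pd_u nN p"] Nu_xu[OF pU] Nu_xv[OF pU] Nu_N[OF pU] xvv_xu[OF pU]
    by (simp add: inner_commute)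
  show ?thesis using L2 b1 b2 Gu[OF pU] by (simp add: algebra_simps)
qed

end


lemma antideriv_open:
  fixes w :: "real \<Rightarrow> real"
  assumes cont: "continuous_on {a<..<b} w" and u0: "u0 \<in> {a<..<b}"
  shows "\<exists>F. \<forall>u\<in>{a<..<b}. (F has_real_derivative w u) (at u)"
proof -
  define F where "F u = integral {u0..u} w - integral {u..u0} w" for u
  have "(F has_real_derivative w u) (at u)" if u: "u \<in> {a<..<b}" for u
  proof -
    define m where "m = min u u0"
    define M where "M = max u u0"
    have mM: "a < m" "M < b" using u u0 by (auto simp: m_def M_def)
    define \<delta> where "\<delta> = min (m - a) (b - M) / 2"
    have \<delta>: "\<delta> > 0" using mM by (simp add: \<delta>_def)
    define \<alpha> where "\<alpha> = m - \<delta>"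
    define \<beta> where "\<beta> = M + \<delta>"
    have ab: "a < \<alpha>" "\<beta> < b" "\<alpha> < u" "u < \<beta>" "\<alpha> < u0" "u0 < \<beta>"
    proof -
      have h: "m \<le> u" "m \<le> u0" "u \<le> M" "u0 \<le> M" by (auto simp: m_def M_def)
      have h2: "\<delta> \<le> (m - a) / 2" "\<delta> \<le> (b - M) / 2" by (auto simp: \<delta>_def)
      show "a < \<alpha>" "\<beta> < b" "\<alpha> < u" "u < \<beta>" "\<alpha> < u0" "u0 < \<beta>"
        using h h2 \<delta> mM unfolding \<alpha>_def \<beta>_def by auto
    qed
    have sub: "{\<alpha>..\<beta>} \<subseteq> {a<..<b}" using ab by auto
    have cc: "continuous_on {\<alpha>..\<beta>} w" using continuous_on_subset[OF cont sub] .
    have int: "w integrable_on {\<alpha>..\<beta>}" using integrable_continuous_real[OF cc] .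
    have Feq: "F y = integral {\<alpha>..y} w - integral {\<alpha>..u0} w" if y: "y \<in> {\<alpha>..\<beta>}" for y
    proof (cases "u0 \<le> y")
      case True
      have i1: "w integrable_on {\<alpha>..y}" using integrable_on_subinterval[OF int] y by auto
      have "integral {\<alpha>..u0} w + integral {u0..y} w = integral {\<alpha>..y} w"
        by (rule Henstock_Kurzweil_Integration.integral_combine) (use True ab i1 in auto)
      moreover have "integral {y..u0} w = 0"
      proof (cases "y = u0")
        case True then show ?thesis by simp
      next
        case False then have "{y..u0} = {}" using \<open>u0 \<le> y\<close> by auto
        then show ?thesis by simp
      qed
      ultimately show ?thesis unfolding F_def by simp
    next
      case False
      have i1: "w integrable_on {\<alpha>..u0}" using integrable_on_subinterval[OF int] ab by auto
      have "integral {\<alpha>..y} w + integral {y..u0} w = integral {\<alpha>..u0} w"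
        by (rule Henstock_Kurzweil_Integration.integral_combine) (use False y i1 in auto)
      moreover have "{u0..y} = {}" using False by auto
      ultimately show ?thesis unfolding F_def by simp
    qed
    have "((\<lambda>y. integral {\<alpha>..y} w) has_real_derivative w u) (at u within {\<alpha>..\<beta>})"
      by (rule integral_has_real_derivative[OF cc]) (use ab in auto)
    then have "((\<lambda>y. integral {\<alpha>..y} w - integral {\<alpha>..u0} w) has_real_derivative w u) (at u within {\<alpha>..\<beta>})"
      using Deriv.field_differentiable_diff[OF _ DERIV_const] by fastforce
    then have "((\<lambda>y. integral {\<alpha>..y} w - integral {\<alpha>..u0} w) has_real_derivative w u) (at u within {\<alpha><..<\<beta>})"
      by (rule has_field_derivative_subset) auto
    then have d1: "((\<lambda>y. integral {\<alpha>..y} w - integral {\<alpha>..u0} w) has_real_derivative w u) (at u)"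
      using at_within_open[of u "{\<alpha><..<\<beta>}"] ab by simp
    show ?thesis
      by (rule has_field_derivative_transform_within_open[OF d1, of "{\<alpha><..<\<beta>}"]) (use ab Feq in auto)
  qed
  then show ?thesis by blast
qed


lemma reparam:
  fixes w :: "real \<Rightarrow> real"
  assumes ab: "a < b" and cont: "continuous_on {a<..<b} w" and pos: "\<And>u. u \<in> {a<..<b} \<Longrightarrow> w u > 0"
  obtains F J \<phi> where "\<And>u. u\<in>{a<..<b} \<Longrightarrow> (F has_real_derivative w u) (at u)" "open J"
    "J = F ` {a<..<b}" "\<And>s. s\<in>J \<Longrightarrow> \<phi> s \<in> {a<..<b}" "\<And>s. s\<in>J \<Longrightarrow> F (\<phi> s) = s"
    "\<And>u. u\<in>{a<..<b} \<Longrightarrow> \<phi> (F u) = u"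
    "\<And>s. s \<in> J \<Longrightarrow> (\<phi> has_real_derivative inverse (w (\<phi> s))) (at s)"
proof -
  have u0: "(a+b)/2 \<in> {a<..<b}" using ab by auto
  obtain F where F: "\<And>u. u\<in>{a<..<b} \<Longrightarrow> (F has_real_derivative w u) (at u)"
    using antideriv_open[OF cont u0] by blast
  have Fc: "isCont F u" if "u \<in> {a<..<b}" for u using DERIV_isCont[OF F[OF that]] .
  have mono: "F u < F u'" if "u \<in> {a<..<b}" "u' \<in> {a<..<b}" "u < u'" for u u'
  proof (rule DERIV_pos_imp_increasing[OF that(3)])
    fix z assume "u \<le> z" "z \<le> u'"
    then have "z \<in> {a<..<b}" using that by auto
    then show "\<exists>y. (F has_real_derivative y) (at z) \<and> y > 0" using F pos by blast
  qed
  have inj: "inj_on F {a<..<b}"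
  proof (rule inj_onI)
    fix u u' assume "u \<in> {a<..<b}" "u' \<in> {a<..<b}" "F u = F u'"
    then show "u = u'" using mono[of u u'] mono[of u' u] by (cases "u < u'"; cases "u' < u") auto
  qed
  define J where "J = F ` {a<..<b}"
  define \<phi> where "\<phi> = inv_into {a<..<b} F"
  have p1: "\<phi> s \<in> {a<..<b}" if "s \<in> J" for s
    unfolding \<phi>_def using that J_def inv_into_into[of s F "{a<..<b}"] by simp
  have p2: "F (\<phi> s) = s" if "s \<in> J" for s
    unfolding \<phi>_def using that J_def by (simp add: f_inv_into_f)
  have p3: "\<phi> (F u) = u" if "u \<in> {a<..<b}" for u
    unfolding \<phi>_def using inv_into_f_f[OF inj that] .
  have loc: "\<exists>e>0. ball (F u) e \<subseteq> J" if u: "u \<in> {a<..<b}" for u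
  proof -
    define \<delta> where "\<delta> = min (u - a) (b - u) / 2"
    have d0: "\<delta> \<le> (u - a) / 2" "\<delta> \<le> (b - u) / 2" "\<delta> > 0" using u by (auto simp: \<delta>_def)
    have d: "\<delta> > 0" "a < u - \<delta>" "u + \<delta> < b" using d0 u by auto
    have i1: "u - \<delta> \<in> {a<..<b}" "u + \<delta> \<in> {a<..<b}" using d u by auto
    have m1: "F (u - \<delta>) < F u" using mono[OF i1(1) u] d by simp
    have m2: "F u < F (u + \<delta>)" using mono[OF u i1(2)] d by simp
    define e where "e = min (F u - F (u - \<delta>)) (F (u + \<delta>) - F u)"
    have e: "e > 0" using m1 m2 by (simp add: e_def)
    have cc: "continuous_on {u - \<delta> .. u + \<delta>} F"
      by (rule continuous_at_imp_continuous_on) (use Fc d in auto)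
    have "ball (F u) e \<subseteq> J"
    proof
      fix z assume "z \<in> ball (F u) e"
      then have z: "F (u - \<delta>) \<le> z" "z \<le> F (u + \<delta>)"
        by (auto simp: e_def dist_real_def)
      obtain t where t: "u - \<delta> \<le> t" "t \<le> u + \<delta>" "F t = z"
        using IVT'[OF z _ cc] d by auto
      then have "t \<in> {a<..<b}" using d by auto
      then show "z \<in> J" using t J_def by auto
    qed
    then show ?thesis using e by blast
  qed
  have oJ: "open J"
  proof (rule openI)
    fix y assume "y \<in> J"
    then obtain u where "u \<in> {a<..<b}" "y = F u" using J_def by auto
    then show "\<exists>e>0. ball y e \<subseteq> J" using loc by blast
  qed
  have dphi: "(\<phi> has_real_derivative inverse (w (\<phi> s))) (at s)" if s: "s \<in> J" for s
  proof -
    obtain e where e: "e > 0" "ball s e \<subseteq> J" using oJ s open_contains_ball by blast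
    have ps: "\<phi> s \<in> {a<..<b}" using p1[OF s] .
    define \<delta> where "\<delta> = min (\<phi> s - a) (b - \<phi> s) / 2"
    have d: "\<delta> > 0" using ps by (auto simp: \<delta>_def)
    have dd: "\<delta> \<le> (\<phi> s - a) / 2" "\<delta> \<le> (b - \<phi> s) / 2" by (auto simp: \<delta>_def)
    have zin: "z \<in> {a<..<b}" if "\<bar>z - \<phi> s\<bar> \<le> \<delta>" for z
      using that dd ps d by (auto simp: abs_le_iff)
    have cont\<phi>: "isCont \<phi> (F (\<phi> s))"
      by (rule isCont_inverse_function[OF d]) (use zin p3 Fc in auto)
    show ?thesis
    proof (rule DERIV_inverse_function[where f=F and a="s - e" and b="s + e"])
      show "(F has_real_derivative w (\<phi> s)) (at (\<phi> s))" using F[OF ps] .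
      show "w (\<phi> s) \<noteq> 0" using pos[OF ps] by simp
      show "s - e < s" "s < s + e" using e by auto
      fix y assume "s - e < y" "y < s + e"
      then have "y \<in> ball s e" by (auto simp: dist_real_def)
      then show "F (\<phi> y) = y" using e p2 by auto
    next
      show "isCont \<phi> s" using cont\<phi> p2[OF s] by simp
    qed
  qed
  show ?thesis by (rule that[OF F oJ J_def p1 p2 p3 dphi])
qed


lemma const_1d:
  assumes "\<And>t. t \<in> {a<..<b} \<Longrightarrow> (\<phi> has_real_derivative 0) (at t)" "s \<in> {a<..<b}" "s' \<in> {a<..<b}"
  shows "\<phi> s = \<phi> s'"
proof -
  have "\<exists>c. \<forall>x\<in>{a<..<b}. \<phi> x = (c::real)"
  proof (rule has_field_derivative_zero_constant)
    show "convex {a<..<b}" by (rule convex_real_interval(8))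
    fix t assume "t \<in> {a<..<b}"
    from has_field_derivative_at_within[OF assms(1)[OF this]]
    show "(\<phi> has_real_derivative 0) (at t within {a<..<b})" .
  qed
  then show ?thesis using assms(2,3) by auto
qed

lemma deriv_zero_loc_const:
  assumes "open S" "s \<in> S" "\<And>t. t \<in> S \<Longrightarrow> \<phi> t = C" "(\<phi> has_real_derivative D) (at s)"
  shows "D = 0"
proof -
  have "((\<lambda>t. C) has_real_derivative 0) (at s)" by (rule DERIV_const)
  then have "(\<phi> has_real_derivative 0) (at s)"
    by (rule has_field_derivative_transform_within_open[OF _ assms(1,2)]) (use assms(3) in auto)
  then show ?thesis using DERIV_unique assms(4) by blast
qed

locale wsurf =
  fixes a b c d :: real and U :: "(real \<times> real) set" and x :: surf and I :: "real set"
    and f g Phi Psi :: "real \<Rightarrow> real" and nu :: "real \<times> real \<Rightarrow> real"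
  assumes ab: "a < b" and cd: "c < d" and U_def: "U = {a<..<b} \<times> {c<..<d}" and oI: "open I"
    and W: "weingarten U x I f g nu"
    and Phi: "\<And>t. t \<in> I \<Longrightarrow> (Phi has_real_derivative (deriv f t / (f t - g t))) (at t)"
    and Psi: "\<And>t. t \<in> I \<Longrightarrow> (Psi has_real_derivative (deriv g t / (g t - f t))) (at t)"
begin

lemma sr: "strongly_regular U x" using W unfolding weingarten_def by blast
lemma ppx: "principal_param U x" using sr unfolding strongly_regular_def by blast

sublocale psurf U x by (rule psurf.intro[OF ppx])

lemma srU: "p \<in> U \<Longrightarrow> nu1 x p - nu2 x p > 0 \<and> (nu1 x p - nu2 x p) * gamma1 x p * gamma2 x p \<noteq> 0"
  using sr unfolding strongly_regular_def by blast

lemma isI: "is_interval I" using W unfolding weingarten_def by blast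
lemma fgI: "t \<in> I \<Longrightarrow> f differentiable (at t) \<and> g differentiable (at t) \<and>
             f t - g t > 0 \<and> deriv f t * deriv g t \<noteq> 0"
  using W unfolding weingarten_def by blast
lemma nuU: "p \<in> U \<Longrightarrow> nu differentiable (at p) \<and> nu p \<in> I \<and>
             pd_u nu p * pd_v nu p \<noteq> 0 \<and> nu1 x p = f (nu p) \<and> nu2 x p = g (nu p)"
  using W unfolding weingarten_def by blast

lemma fder: "t \<in> I \<Longrightarrow> (f has_real_derivative deriv f t) (at t)"
  using fgI DERIV_deriv_iff_real_differentiable by blast
lemma gder: "t \<in> I \<Longrightarrow> (g has_real_derivative deriv g t) (at t)"
  using fgI DERIV_deriv_iff_real_differentiable by blast

lemma chain_u:
  assumes "p \<in> U" "(\<Theta> has_real_derivative D) (at (nu p))"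
  shows "((\<lambda>t. \<Theta> (nu (t, snd p))) has_real_derivative D * pd_u nu p) (at (fst p))"
proof -
  have "((\<lambda>t. nu (t, snd p)) has_real_derivative pd_u nu p) (at (fst p))"
    using pd_u_real nuU[OF assms(1)] by blast
  then show ?thesis using DERIV_chain2[of \<Theta> D "\<lambda>t. nu (t, snd p)" "fst p"] assms(2) by simp
qed

lemma chain_v:
  assumes "p \<in> U" "(\<Theta> has_real_derivative D) (at (nu p))"
  shows "((\<lambda>t. \<Theta> (nu (fst p, t))) has_real_derivative D * pd_v nu p) (at (snd p))"
proof -
  have "((\<lambda>t. nu (fst p, t)) has_real_derivative pd_v nu p) (at (snd p))"
    using pd_v_real nuU[OF assms(1)] by blast
  then show ?thesis using DERIV_chain2[of \<Theta> D "\<lambda>t. nu (fst p, t)" "snd p"] assms(2) by simp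
qed

lemma rect_const:
  assumes du: "\<And>p. p\<in>U \<Longrightarrow> ((\<lambda>t. k (t, snd p)) has_real_derivative 0) (at (fst p))"
    and dv: "\<And>p. p\<in>U \<Longrightarrow> ((\<lambda>t. k (fst p, t)) has_real_derivative 0) (at (snd p))"
    and p: "p \<in> U" and q: "q \<in> U"
  shows "k p = (k q :: real)"
proof -
  obtain u v where pu: "p = (u,v)" by (cases p)
  obtain u' v' where qu: "q = (u',v')" by (cases q)
  have uv: "u \<in> {a<..<b}" "v \<in> {c<..<d}" "u' \<in> {a<..<b}" "v' \<in> {c<..<d}" using p q pu qu U_def by auto
  have "k (u, v) = k (u', v)"
  proof (rule const_1d[of a b "\<lambda>t. k (t, v)"])
    fix t assume "t \<in> {a<..<b}"
    then show "((\<lambda>t. k (t, v)) has_real_derivative 0) (at t)" using du[of "(t,v)"] uv U_def by auto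
  qed (use uv in auto)
  also have "k (u', v) = k (u', v')"
  proof (rule const_1d[of c d "\<lambda>t. k (u', t)"])
    fix t assume "t \<in> {c<..<d}"
    then show "((\<lambda>t. k (u', t)) has_real_derivative 0) (at t)" using dv[of "(u',t)"] uv U_def by auto
  qed (use uv in auto)
  finally show ?thesis using pu qu by simp
qed

lemma rect_const_v:
  assumes dv: "\<And>p. p\<in>U \<Longrightarrow> ((\<lambda>t. k (fst p, t)) has_real_derivative 0) (at (snd p))"
    and "(u,v) \<in> U" "(u,v') \<in> U"
  shows "k (u,v) = (k (u,v') :: real)"
proof (rule const_1d[of c d "\<lambda>t. k (u, t)"])
  fix t assume "t \<in> {c<..<d}"
  then show "((\<lambda>t. k (u, t)) has_real_derivative 0) (at t)" using dv[of "(u,t)"] assms(2) U_def by auto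
qed (use assms U_def in auto)

lemma rect_const_u:
  assumes du: "\<And>p. p\<in>U \<Longrightarrow> ((\<lambda>t. k (t, snd p)) has_real_derivative 0) (at (fst p))"
    and "(u,v) \<in> U" "(u',v) \<in> U"
  shows "k (u,v) = (k (u',v) :: real)"
proof (rule const_1d[of a b "\<lambda>t. k (t, v)"])
  fix t assume "t \<in> {a<..<b}"
  then show "((\<lambda>t. k (t, v)) has_real_derivative 0) (at t)" using du[of "(t,v)"] assms(2) U_def by auto
qed (use assms U_def in auto)

lemma openU: "open U" unfolding U_def by (simp add: open_Times)

lemma p0U: "((a+b)/2, (c+d)/2) \<in> U" using ab cd U_def by auto

lemma S2: "(\<forall>p\<in>U. deriv f (nu p) + deriv g (nu p) = 0) \<longleftrightarrow>
            (\<exists>H. \<forall>p\<in>U. (f (nu p) + g (nu p)) / 2 = H)"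
proof
  assume z: "\<forall>p\<in>U. deriv f (nu p) + deriv g (nu p) = 0"
  define k where "k p = (f (nu p) + g (nu p)) / 2" for p
  have dk: "((\<lambda>r. (f r + g r) / 2) has_real_derivative (deriv f (nu p) + deriv g (nu p)) / 2) (at (nu p))"
    if "p \<in> U" for p
    using nuU[OF that] fder gder by (auto intro!: derivative_eq_intros)
  have "k p = k ((a+b)/2, (c+d)/2)" if "p \<in> U" for p
  proof (rule rect_const[OF _ _ that p0U])
    fix q assume q: "q \<in> U"
    show "((\<lambda>t. k (t, snd q)) has_real_derivative 0) (at (fst q))"
      using chain_u[OF q dk[OF q]] z q by (simp add: k_def)
    show "((\<lambda>t. k (fst q, t)) has_real_derivative 0) (at (snd q))"
      using chain_v[OF q dk[OF q]] z q by (simp add: k_def)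
  qed
  then show "\<exists>H. \<forall>p\<in>U. (f (nu p) + g (nu p)) / 2 = H" unfolding k_def by blast
next
  assume "\<exists>H. \<forall>p\<in>U. (f (nu p) + g (nu p)) / 2 = H"
  then obtain H where H: "\<And>p. p \<in> U \<Longrightarrow> (f (nu p) + g (nu p)) / 2 = H" by blast
  show "\<forall>p\<in>U. deriv f (nu p) + deriv g (nu p) = 0"
  proof
    fix p assume p: "p \<in> U"
    have dk: "((\<lambda>r. (f r + g r) / 2) has_real_derivative (deriv f (nu p) + deriv g (nu p)) / 2) (at (nu p))"
      using nuU[OF p] fder gder by (auto intro!: derivative_eq_intros)
    have "(deriv f (nu p) + deriv g (nu p)) / 2 * pd_u nu p = 0"
    proof (rule deriv_zero_loc_const[OF open_slice_u[OF openU, of "snd p"]])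
      show "fst p \<in> {t. (t, snd p) \<in> U}" using p by simp
      show "(f (nu (t, snd p)) + g (nu (t, snd p))) / 2 = H" if "t \<in> {t. (t, snd p) \<in> U}" for t
        using H that by simp
      show "((\<lambda>t. (f (nu (t, snd p)) + g (nu (t, snd p))) / 2) has_real_derivative
              (deriv f (nu p) + deriv g (nu p)) / 2 * pd_u nu p) (at (fst p))"
        using chain_u[OF p dk] by simp
    qed
    then show "deriv f (nu p) + deriv g (nu p) = 0" using nuU[OF p] by simp
  qed
qed

lemma S1_fwd:
  assumes "admits_isothermal_geometric_principal U x I f g nu Phi Psi"
  shows "\<forall>p\<in>U. deriv f (nu p) + deriv g (nu p) = 0"
proof
  obtain V phi where dif: "diffeo2 V U phi" and WV: "weingarten V (x \<circ> phi) I f g (nu \<circ> phi)"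
    and GP: "geometric_principal V (x \<circ> phi) Phi Psi (nu \<circ> phi)"
    and iso: "\<forall>q\<in>V. fE (x \<circ> phi) q = fG (x \<circ> phi) q \<and> fF (x \<circ> phi) q = 0"
    using assms unfolding admits_isothermal_geometric_principal_def by blast
  have oV: "open V" and bij: "bij_betw phi V U" using dif unfolding diffeo2_def by auto
  obtain c0 where c0: "\<And>q. q \<in> V \<Longrightarrow> lam (x \<circ> phi) Phi (nu \<circ> phi) q = c0"
    using GP unfolding geometric_principal_def by blast
  obtain d0 where d0: "\<And>q. q \<in> V \<Longrightarrow> mu (x \<circ> phi) Psi (nu \<circ> phi) q = d0"
    using GP unfolding geometric_principal_def by blast
  have kc: "Phi ((nu \<circ> phi) r) - Psi ((nu \<circ> phi) r) = c0 - d0" if "r \<in> V" for r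
    using c0[OF that] d0[OF that] iso that unfolding lam_def mu_def by auto
  fix p assume p: "p \<in> U"
  obtain q where q: "q \<in> V" "phi q = p" using bij p unfolding bij_betw_def by auto
  have nq: "(nu \<circ> phi) differentiable (at q)" "(nu \<circ> phi) q \<in> I"
    "pd_u (nu \<circ> phi) q * pd_v (nu \<circ> phi) q \<noteq> 0"
    using WV q unfolding weingarten_def by blast+
  let ?t = "(nu \<circ> phi) q"
  have tI: "?t \<in> I" using nq by simp
  have dP: "(Phi has_real_derivative deriv f ?t / (f ?t - g ?t)) (at ?t)" using Phi[OF tI] .
  have dQ: "(Psi has_real_derivative deriv g ?t / (g ?t - f ?t)) (at ?t)" using Psi[OF tI] .
  have ds: "((\<lambda>t. (nu \<circ> phi) (t, snd q)) has_real_derivative pd_u (nu \<circ> phi) q) (at (fst q))"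
    using pd_u_real nq(1) by blast
  have d1: "((\<lambda>t. Phi ((nu \<circ> phi) (t, snd q))) has_real_derivative
      deriv f ?t / (f ?t - g ?t) * pd_u (nu \<circ> phi) q) (at (fst q))"
  proof -
    have dP': "(Phi has_real_derivative deriv f ?t / (f ?t - g ?t)) (at ((\<lambda>t. (nu \<circ> phi) (t, snd q)) (fst q)))"
      using dP by simp
    show ?thesis by (rule DERIV_chain2[OF dP' ds])
  qed
  have d2: "((\<lambda>t. Psi ((nu \<circ> phi) (t, snd q))) has_real_derivative
      deriv g ?t / (g ?t - f ?t) * pd_u (nu \<circ> phi) q) (at (fst q))"
  proof -
    have dQ': "(Psi has_real_derivative deriv g ?t / (g ?t - f ?t)) (at ((\<lambda>t. (nu \<circ> phi) (t, snd q)) (fst q)))"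
      using dQ by simp
    show ?thesis by (rule DERIV_chain2[OF dQ' ds])
  qed
  have d3: "((\<lambda>t. Phi ((nu \<circ> phi) (t, snd q)) - Psi ((nu \<circ> phi) (t, snd q))) has_real_derivative
      deriv f ?t / (f ?t - g ?t) * pd_u (nu \<circ> phi) q - deriv g ?t / (g ?t - f ?t) * pd_u (nu \<circ> phi) q) (at (fst q))"
    using Deriv.field_differentiable_diff[OF d1 d2] .
  have z: "deriv f ?t / (f ?t - g ?t) * pd_u (nu \<circ> phi) q - deriv g ?t / (g ?t - f ?t) * pd_u (nu \<circ> phi) q = 0"
  proof (rule deriv_zero_loc_const[OF open_slice_u[OF oV, of "snd q"] _ _ d3])
    show "fst q \<in> {t. (t, snd q) \<in> V}" using q by simp
    show "Phi ((nu \<circ> phi) (t, snd q)) - Psi ((nu \<circ> phi) (t, snd q)) = c0 - d0"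
      if "t \<in> {t. (t, snd q) \<in> V}" for t using kc that by simp
  qed
  have fg: "f ?t - g ?t > 0" using fgI[OF tI] by blast
  have pu: "pd_u (nu \<circ> phi) q \<noteq> 0" using nq(3) by simp
  have "(deriv f ?t + deriv g ?t) / (f ?t - g ?t) * pd_u (nu \<circ> phi) q = 0"
  proof -
    have "deriv g ?t / (g ?t - f ?t) = - (deriv g ?t / (f ?t - g ?t))"
      by (metis divide_minus_right minus_diff_eq)
    then have "deriv f ?t / (f ?t - g ?t) * pd_u (nu \<circ> phi) q + deriv g ?t / (f ?t - g ?t) * pd_u (nu \<circ> phi) q = 0"
      using z by simp
    then show ?thesis by (simp add: add_divide_distrib distrib_right)
  qed
  then have "deriv f ?t + deriv g ?t = 0" using pu fg by simp
  then show "deriv f (nu p) + deriv g (nu p) = 0" using q by simp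
qed

end


locale wsurf_rep = wsurf +
  fixes H :: real and u0 v0 :: real and F1 F2 \<phi>1 \<phi>2 :: "real \<Rightarrow> real" and J1 J2 :: "real set"
  assumes z: "\<And>p. p \<in> U \<Longrightarrow> deriv f (nu p) + deriv g (nu p) = 0"
    and Hd: "\<And>p. p \<in> U \<Longrightarrow> f (nu p) + g (nu p) = 2 * H"
    and u0: "u0 \<in> {a<..<b}" and v0: "v0 \<in> {c<..<d}"
    and F1d: "\<And>u. u \<in> {a<..<b} \<Longrightarrow> (F1 has_real_derivative sqrt (fL x (u, v0) - H * fE x (u, v0))) (at u)"
    and J1o: "open J1" and J1d: "J1 = F1 ` {a<..<b}"
    and p11: "\<And>s. s \<in> J1 \<Longrightarrow> \<phi>1 s \<in> {a<..<b}" and p12: "\<And>s. s \<in> J1 \<Longrightarrow> F1 (\<phi>1 s) = s"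
    and p13: "\<And>u. u \<in> {a<..<b} \<Longrightarrow> \<phi>1 (F1 u) = u"
    and p14: "\<And>s. s \<in> J1 \<Longrightarrow> (\<phi>1 has_real_derivative inverse (sqrt (fL x (\<phi>1 s, v0) - H * fE x (\<phi>1 s, v0)))) (at s)"
    and F2d: "\<And>v. v \<in> {c<..<d} \<Longrightarrow> (F2 has_real_derivative sqrt (H * fG x (u0, v) - fN x (u0, v))) (at v)"
    and J2o: "open J2" and J2d: "J2 = F2 ` {c<..<d}"
    and p21: "\<And>s. s \<in> J2 \<Longrightarrow> \<phi>2 s \<in> {c<..<d}" and p22: "\<And>s. s \<in> J2 \<Longrightarrow> F2 (\<phi>2 s) = s"
    and p23: "\<And>v. v \<in> {c<..<d} \<Longrightarrow> \<phi>2 (F2 v) = v"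
    and p24: "\<And>s. s \<in> J2 \<Longrightarrow> (\<phi>2 has_real_derivative inverse (sqrt (H * fG x (u0, \<phi>2 s) - fN x (u0, \<phi>2 s)))) (at s)"
begin

definition "P p = fL x p - H * fE x p"
definition "Q p = H * fG x p - fN x p"

lemma nu1e: "p \<in> U \<Longrightarrow> fL x p = f (nu p) * fE x p"
  using nuU[of p] Epos[of p] by (simp add: nu1_def field_simps)
lemma nu2e: "p \<in> U \<Longrightarrow> fN x p = g (nu p) * fG x p"
  using nuU[of p] Gpos[of p] by (simp add: nu2_def field_simps)
lemma fmg: "p \<in> U \<Longrightarrow> f (nu p) - g (nu p) > 0"
  using srU[of p] nuU[of p] by simp

lemma Pe: assumes "p \<in> U" shows "P p = fE x p * (f (nu p) - g (nu p)) / 2"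
proof -
  have h: "2 * H = f (nu p) + g (nu p)" using Hd[OF assms] by simp
  have "P p = f (nu p) * fE x p - H * fE x p" unfolding P_def using nu1e[OF assms] by simp
  also have "\<dots> = (2 * f (nu p) - 2 * H) * fE x p / 2" by (simp add: algebra_simps)
  also have "\<dots> = fE x p * (f (nu p) - g (nu p)) / 2" unfolding h by (simp add: algebra_simps)
  finally show ?thesis .
qed
lemma Qe: assumes "p \<in> U" shows "Q p = fG x p * (f (nu p) - g (nu p)) / 2"
proof -
  have h: "2 * H = f (nu p) + g (nu p)" using Hd[OF assms] by simp
  have "Q p = H * fG x p - g (nu p) * fG x p" unfolding Q_def using nu2e[OF assms] by simp
  also have "\<dots> = (2 * H - 2 * g (nu p)) * fG x p / 2" by (simp add: algebra_simps)
  also have "\<dots> = fG x p * (f (nu p) - g (nu p)) / 2" unfolding h by (simp add: algebra_simps)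
  finally show ?thesis .
qed
lemma Ppos: assumes "p \<in> U" shows "P p > 0"
proof -
  have "fE x p * (f (nu p) - g (nu p)) > 0" using Epos[OF assms] fmg[OF assms] by (rule mult_pos_pos)
  then show ?thesis using Pe[OF assms] by simp
qed
lemma Qpos: assumes "p \<in> U" shows "Q p > 0"
proof -
  have "fG x p * (f (nu p) - g (nu p)) > 0" using Gpos[OF assms] fmg[OF assms] by (rule mult_pos_pos)
  then show ?thesis using Qe[OF assms] by simp
qed

lemma sP: "smooth_on2 U P"
proof -
  have "smooth_on2 U (\<lambda>p. fL x p - H * fE x p)"
    by (rule sm_minus[OF U sL sm_mult[OF U sm_const sE]])
  then show ?thesis by (simp add: P_def[abs_def])
qed
lemma sQ: "smooth_on2 U Q"
proof -
  have "smooth_on2 U (\<lambda>p. H * fG x p - fN x p)"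
    by (rule sm_minus[OF U sm_mult[OF U sm_const sG] sNN])
  then show ?thesis by (simp add: Q_def[abs_def])
qed

lemma Pv0: assumes p: "p \<in> U" shows "((\<lambda>t. P (fst p, t)) has_real_derivative 0) (at (snd p))"
proof -
  have d1: "((\<lambda>t. fL x (fst p, t)) has_real_derivative pd_v (fL x) p) (at (snd p))"
    using pd_v_real smooth_diff[OF sL p] by blast
  have d2: "((\<lambda>t. fE x (fst p, t)) has_real_derivative pd_v (fE x) p) (at (snd p))"
    using pd_v_real smooth_diff[OF sE p] by blast
  have "((\<lambda>t. fL x (fst p, t) - H * fE x (fst p, t)) has_real_derivative pd_v (fL x) p - H * pd_v (fE x) p) (at (snd p))"
    by (intro Deriv.field_differentiable_diff DERIV_cmult d1 d2)
  moreover have "pd_v (fL x) p - H * pd_v (fE x) p = 0"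
  proof -
    have "fL x p / fE x p + fN x p / fG x p = 2 * H"
      using nuU[OF p] Hd[OF p] by (simp add: nu1_def nu2_def)
    then show ?thesis using codazzi1[OF p] by simp
  qed
  ultimately show ?thesis by (simp add: P_def)
qed

lemma Qu0: assumes p: "p \<in> U" shows "((\<lambda>t. Q (t, snd p)) has_real_derivative 0) (at (fst p))"
proof -
  have d1: "((\<lambda>t. fN x (t, snd p)) has_real_derivative pd_u (fN x) p) (at (fst p))"
    using pd_u_real smooth_diff[OF sNN p] by blast
  have d2: "((\<lambda>t. fG x (t, snd p)) has_real_derivative pd_u (fG x) p) (at (fst p))"
    using pd_u_real smooth_diff[OF sG p] by blast
  have "((\<lambda>t. H * fG x (t, snd p) - fN x (t, snd p)) has_real_derivative H * pd_u (fG x) p - pd_u (fN x) p) (at (fst p))"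
    by (intro Deriv.field_differentiable_diff DERIV_cmult d1 d2)
  moreover have "H * pd_u (fG x) p - pd_u (fN x) p = 0"
  proof -
    have "fL x p / fE x p + fN x p / fG x p = 2 * H"
      using nuU[OF p] Hd[OF p] by (simp add: nu1_def nu2_def)
    then show ?thesis using codazzi2[OF p] by simp
  qed
  ultimately show ?thesis by (simp add: Q_def)
qed

lemma Pconst: "(u,v) \<in> U \<Longrightarrow> (u,v') \<in> U \<Longrightarrow> P (u,v) = P (u,v')"
  by (rule rect_const_v[OF Pv0])
lemma Qconst: "(u,v) \<in> U \<Longrightarrow> (u',v) \<in> U \<Longrightarrow> Q (u,v) = Q (u',v)"
  by (rule rect_const_u[OF Qu0])

definition "V = J1 \<times> J2"
definition "phi q = (\<phi>1 (fst q), \<phi>2 (snd q))"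
definition "D1 s = inverse (sqrt (P (\<phi>1 s, v0)))"
definition "D2 t = inverse (sqrt (Q (u0, \<phi>2 t)))"

lemma oV: "open V" unfolding V_def using J1o J2o by (simp add: open_Times)
lemma phiU: "q \<in> V \<Longrightarrow> phi q \<in> U" unfolding V_def phi_def U_def using p11 p21 by (auto simp: mem_Times_iff)

lemma dphi1: "s \<in> J1 \<Longrightarrow> (\<phi>1 has_real_derivative D1 s) (at s)"
  using p14 by (simp add: D1_def P_def)
lemma dphi2: "t \<in> J2 \<Longrightarrow> (\<phi>2 has_real_derivative D2 t) (at t)"
  using p24 by (simp add: D2_def Q_def)

lemma D1e: "q \<in> V \<Longrightarrow> D1 (fst q) = inverse (sqrt (P (phi q)))"
proof -
  assume q: "q \<in> V"
  have "(\<phi>1 (fst q), v0) \<in> U" "phi q \<in> U" using phiU[OF q] v0 by (auto simp: phi_def U_def)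
  then have "P (\<phi>1 (fst q), v0) = P (phi q)" unfolding phi_def using Pconst by blast
  then show ?thesis by (simp add: D1_def)
qed
lemma D2e: "q \<in> V \<Longrightarrow> D2 (snd q) = inverse (sqrt (Q (phi q)))"
proof -
  assume q: "q \<in> V"
  have "(u0, \<phi>2 (snd q)) \<in> U" "phi q \<in> U" using phiU[OF q] u0 by (auto simp: phi_def U_def)
  then have "Q (u0, \<phi>2 (snd q)) = Q (phi q)" unfolding phi_def using Qconst by blast
  then show ?thesis by (simp add: D2_def)
qed
lemma D1pos: "q \<in> V \<Longrightarrow> D1 (fst q) > 0" using D1e Ppos phiU by simp
lemma D2pos: "q \<in> V \<Longrightarrow> D2 (snd q) > 0" using D2e Qpos phiU by simp

definition "Inv1 r = inverse (sqrt (P r))"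
definition "Inv2 r = inverse (sqrt (Q r))"

lemma sInv1: "smooth_on2 U Inv1"
proof -
  have nz: "sqrt (P p) \<noteq> 0" if "p \<in> U" for p using Ppos[OF that] by simp
  show ?thesis unfolding Inv1_def[abs_def] by (rule sm_inverse[OF U sm_sqrt[OF U sP Ppos] nz])
qed
lemma sInv2: "smooth_on2 U Inv2"
proof -
  have nz: "sqrt (Q p) \<noteq> 0" if "p \<in> U" for p using Qpos[OF that] by simp
  show ?thesis unfolding Inv2_def[abs_def] by (rule sm_inverse[OF U sm_sqrt[OF U sQ Qpos] nz])
qed

lemma diff_real: "(h has_real_derivative D) (at t) \<Longrightarrow> h differentiable (at t)"
  by (rule differentiableI, rule has_field_derivative_imp_has_derivative)

lemma diff_fst: "(\<lambda>q::real\<times>real. (h::real\<Rightarrow>real) (fst q)) differentiable (at q)" if "(h has_real_derivative D) (at (fst q))"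
  by (rule differentiable_compose[of h fst, OF diff_real[OF that]])
     (simp add: bounded_linear_fst bounded_linear_imp_differentiable)
lemma diff_snd: "(\<lambda>q::real\<times>real. (h::real\<Rightarrow>real) (snd q)) differentiable (at q)" if "(h has_real_derivative D) (at (snd q))"
  by (rule differentiable_compose[of h snd, OF diff_real[OF that]])
     (simp add: bounded_linear_snd bounded_linear_imp_differentiable)

lemma pdu_fst: "(h has_real_derivative D) (at (fst q)) \<Longrightarrow> pd_u (\<lambda>q::real\<times>real. (h::real\<Rightarrow>real) (fst q)) q = D"
  by (rule pd_u_from_real) simp
lemma pdv_fst: "pd_v (\<lambda>q::real\<times>real. (h::real\<Rightarrow>real) (fst q)) q = 0"
  by (rule pd_v_from_real) simp
lemma pdu_snd: "pd_u (\<lambda>q::real\<times>real. (h::real\<Rightarrow>real) (snd q)) q = 0"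
  by (rule pd_u_from_real) simp
lemma pdv_snd: "(h has_real_derivative D) (at (snd q)) \<Longrightarrow> pd_v (\<lambda>q::real\<times>real. (h::real\<Rightarrow>real) (snd q)) q = D"
  by (rule pd_v_from_real) simp

lemma V1: "q \<in> V \<Longrightarrow> fst q \<in> J1" unfolding V_def by (auto simp: mem_Times_iff)
lemma V2: "q \<in> V \<Longrightarrow> snd q \<in> J2" unfolding V_def by (auto simp: mem_Times_iff)

lemma Phi1_Ck: "Ck_on k V (\<lambda>q. \<phi>1 (fst q))"
proof (induction k)
  case 0
  have "continuous_on J1 \<phi>1"
    by (rule continuous_at_imp_continuous_on) (use dphi1 DERIV_isCont in blast)
  then have "continuous_on V (\<lambda>q. \<phi>1 (fst q))"
    by (rule continuous_on_compose2[OF _ continuous_on_fst[OF continuous_on_id]]) (use V1 in auto)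
  then show ?case by simp
next
  case (Suc k)
  show ?case
  proof (rule Ck_on_SucI)
    show "(\<lambda>q. \<phi>1 (fst q)) differentiable (at q)" if "q \<in> V" for q
      by (rule diff_fst[OF dphi1[OF V1[OF that]]])
    have e: "Inv1 (\<phi>1 (fst q), v0) = pd_u (\<lambda>q. \<phi>1 (fst q)) q" if "q \<in> V" for q
      using pdu_fst[OF dphi1[OF V1[OF that]]] by (simp add: D1_def Inv1_def)
    have m: "(\<phi>1 (fst q), v0) \<in> U" if "q \<in> V" for q using p11 V1[OF that] v0 U_def by auto
    have "Ck_on k V (\<lambda>q. Inv1 (\<phi>1 (fst q), v0))"
      by (rule Ck_on_comp[OF U oV _ Suc.IH Ck_on_const m]) (use sInv1 smooth_on2_def in blast)
    then show "Ck_on k V (pd_u (\<lambda>q. \<phi>1 (fst q)))" by (rule Ck_on_cong[OF oV e, rotated])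
    show "Ck_on k V (pd_v (\<lambda>q. \<phi>1 (fst q)))" unfolding pdv_fst by (rule Ck_on_const)
  qed
qed

lemma Phi2_Ck: "Ck_on k V (\<lambda>q. \<phi>2 (snd q))"
proof (induction k)
  case 0
  have "continuous_on J2 \<phi>2"
    by (rule continuous_at_imp_continuous_on) (use dphi2 DERIV_isCont in blast)
  then have "continuous_on V (\<lambda>q. \<phi>2 (snd q))"
    by (rule continuous_on_compose2[OF _ continuous_on_snd[OF continuous_on_id]]) (use V2 in auto)
  then show ?case by simp
next
  case (Suc k)
  show ?case
  proof (rule Ck_on_SucI)
    show "(\<lambda>q. \<phi>2 (snd q)) differentiable (at q)" if "q \<in> V" for q
      by (rule diff_snd[OF dphi2[OF V2[OF that]]])
    have e: "Inv2 (u0, \<phi>2 (snd q)) = pd_v (\<lambda>q. \<phi>2 (snd q)) q" if "q \<in> V" for q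
      using pdv_snd[OF dphi2[OF V2[OF that]]] by (simp add: D2_def Inv2_def)
    have m: "(u0, \<phi>2 (snd q)) \<in> U" if "q \<in> V" for q using p21 V2[OF that] u0 U_def by auto
    have "Ck_on k V (\<lambda>q. Inv2 (u0, \<phi>2 (snd q)))"
      by (rule Ck_on_comp[OF U oV _ Ck_on_const Suc.IH m]) (use sInv2 smooth_on2_def in blast)
    then show "Ck_on k V (pd_v (\<lambda>q. \<phi>2 (snd q)))" by (rule Ck_on_cong[OF oV e, rotated])
    show "Ck_on k V (pd_u (\<lambda>q. \<phi>2 (snd q)))" unfolding pdu_snd by (rule Ck_on_const)
  qed
qed

lemma sPhi1: "smooth_on2 V (\<lambda>q. \<phi>1 (fst q))" unfolding smooth_on2_def using Phi1_Ck by blast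
lemma sPhi2: "smooth_on2 V (\<lambda>q. \<phi>2 (snd q))" unfolding smooth_on2_def using Phi2_Ck by blast

lemma sPsi1: "smooth_on2 U (\<lambda>p. F1 (fst p))"
  unfolding smooth_on2_def
proof
  fix k
  have "Ck_on (Suc k) U (\<lambda>p. F1 (fst p))"
  proof (rule Ck_on_SucI)
    have d: "(F1 has_real_derivative sqrt (P (fst p, v0))) (at (fst p))" if "p \<in> U" for p
      using F1d[of "fst p"] that U_def by (auto simp: P_def)
    show "(\<lambda>p. F1 (fst p)) differentiable (at p)" if "p \<in> U" for p by (rule diff_fst[OF d[OF that]])
    have e: "sqrt (P (fst p, v0)) = pd_u (\<lambda>p. F1 (fst p)) p" if "p \<in> U" for p
      using pdu_fst[OF d[OF that]] by simp
    have m: "(fst p, v0) \<in> U" if "p \<in> U" for p using that v0 U_def by auto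
    have "smooth_on2 U (\<lambda>p. sqrt (P (fst p, v0)))"
      by (rule sm_comp[OF U U _ sm_fst sm_const m]) (rule sm_sqrt[OF U sP Ppos])
    then have "Ck_on k U (\<lambda>p. sqrt (P (fst p, v0)))" unfolding smooth_on2_def by blast
    then show "Ck_on k U (pd_u (\<lambda>p. F1 (fst p)))" by (rule Ck_on_cong[OF U e, rotated])
    show "Ck_on k U (pd_v (\<lambda>p. F1 (fst p)))" unfolding pdv_fst by (rule Ck_on_const)
  qed
  then show "Ck_on k U (\<lambda>p. F1 (fst p))" by (rule Ck_on_mono)
qed

lemma sPsi2: "smooth_on2 U (\<lambda>p. F2 (snd p))"
  unfolding smooth_on2_def
proof
  fix k
  have "Ck_on (Suc k) U (\<lambda>p. F2 (snd p))"
  proof (rule Ck_on_SucI)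
    have d: "(F2 has_real_derivative sqrt (Q (u0, snd p))) (at (snd p))" if "p \<in> U" for p
      using F2d[of "snd p"] that U_def by (auto simp: Q_def)
    show "(\<lambda>p. F2 (snd p)) differentiable (at p)" if "p \<in> U" for p by (rule diff_snd[OF d[OF that]])
    have e: "sqrt (Q (u0, snd p)) = pd_v (\<lambda>p. F2 (snd p)) p" if "p \<in> U" for p
      using pdv_snd[OF d[OF that]] by simp
    have m: "(u0, snd p) \<in> U" if "p \<in> U" for p using that u0 U_def by auto
    have "smooth_on2 U (\<lambda>p. sqrt (Q (u0, snd p)))"
      by (rule sm_comp[OF U U _ sm_const sm_snd m]) (rule sm_sqrt[OF U sQ Qpos])
    then have "Ck_on k U (\<lambda>p. sqrt (Q (u0, snd p)))" unfolding smooth_on2_def by blast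
    then show "Ck_on k U (pd_v (\<lambda>p. F2 (snd p)))" by (rule Ck_on_cong[OF U e, rotated])
    show "Ck_on k U (pd_u (\<lambda>p. F2 (snd p)))" unfolding pdu_snd by (rule Ck_on_const)
  qed
  then show "Ck_on k U (\<lambda>p. F2 (snd p))" by (rule Ck_on_mono)
qed

lemma sm_pair: "open S \<Longrightarrow> smooth_on2 S (\<alpha>::real\<times>real\<Rightarrow>real) \<Longrightarrow> smooth_on2 S (\<beta>::real\<times>real\<Rightarrow>real) \<Longrightarrow> smooth_on2 S (\<lambda>q. (\<alpha> q, \<beta> q))"
proof -
  assume S: "open S" and a: "smooth_on2 S \<alpha>" and b: "smooth_on2 S \<beta>"
  have "smooth_on2 S (\<lambda>q. \<alpha> q *\<^sub>R (1::real, 0::real) + \<beta> q *\<^sub>R (0, 1))"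
    by (rule sm_add[OF S sm_scaleR[OF S a sm_const] sm_scaleR[OF S b sm_const]])
  then show ?thesis by (rule sm_cong[OF S, rotated]) simp
qed

lemma sphi: "smooth_on2 V phi"
  unfolding phi_def[abs_def] by (rule sm_pair[OF oV sPhi1 sPhi2])

lemma inj_phi: "inj_on phi V"
proof (rule inj_onI)
  fix q q' assume q: "q \<in> V" "q' \<in> V" "phi q = phi q'"
  then have "\<phi>1 (fst q) = \<phi>1 (fst q')" "\<phi>2 (snd q) = \<phi>2 (snd q')" by (auto simp: phi_def)
  then have "F1 (\<phi>1 (fst q)) = F1 (\<phi>1 (fst q'))" "F2 (\<phi>2 (snd q)) = F2 (\<phi>2 (snd q'))" by simp_all
  then have "fst q = fst q'" "snd q = snd q'" using p12 p22 V1 V2 q by auto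
  then show "q = q'" by (simp add: prod_eq_iff)
qed

lemma pinv: "p \<in> U \<Longrightarrow> (F1 (fst p), F2 (snd p)) \<in> V \<and> phi (F1 (fst p), F2 (snd p)) = p"
  unfolding V_def phi_def using J1d J2d p13 p23 U_def by (auto simp: mem_Times_iff)

lemma bij_phi: "bij_betw phi V U"
proof (rule bij_betw_imageI[OF inj_phi])
  show "phi ` V = U"
  proof
    show "phi ` V \<subseteq> U" using phiU by auto
    show "U \<subseteq> phi ` V"
    proof
      fix p assume "p \<in> U" then show "p \<in> phi ` V" using pinv by (metis image_eqI)
    qed
  qed
qed

lemma inv_phi: "p \<in> U \<Longrightarrow> inv_into V phi p = (F1 (fst p), F2 (snd p))"
  using inv_into_f_eq[OF inj_phi] pinv by blast

lemma diffeo: "diffeo2 V U phi"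
  unfolding diffeo2_def
proof (intro conjI)
  show "open V" by (rule oV)
  show "open U" by (rule U)
  show "bij_betw phi V U" by (rule bij_phi)
  show "smooth_on2 V phi" by (rule sphi)
  have "smooth_on2 U (\<lambda>p. (F1 (fst p), F2 (snd p)))" by (rule sm_pair[OF U sPsi1 sPsi2])
  then show "smooth_on2 U (inv_into V phi)" by (rule sm_cong[OF U, rotated]) (simp add: inv_phi)
qed

lemma diff_phi: "q \<in> V \<Longrightarrow> phi differentiable (at q)"
  unfolding phi_def[abs_def]
  by (rule differentiable_Pair[OF diff_fst[OF dphi1[OF V1]] diff_snd[OF dphi2[OF V2]]])

lemma diff_comp: "q \<in> V \<Longrightarrow> h differentiable (at (phi q)) \<Longrightarrow> (\<lambda>q. h (phi q)) differentiable (at q)"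
  by (rule differentiable_compose[of h phi, OF _ diff_phi])

lemma pchain:
  fixes h :: "real \<times> real \<Rightarrow> 'a::real_normed_vector"
  assumes q: "q \<in> V" and hd: "h differentiable (at (phi q))"
  shows "pd_u (\<lambda>q. h (phi q)) q = D1 (fst q) *\<^sub>R pd_u h (phi q)"
    and "pd_v (\<lambda>q. h (phi q)) q = D2 (snd q) *\<^sub>R pd_v h (phi q)"
proof -
  obtain DG where DG: "(h has_derivative DG) (at (phi q))" using hd unfolding differentiable_def by blast
  have DG': "(h has_derivative DG) (at (\<phi>1 (fst q), \<phi>2 (snd q)))" using DG by (simp add: phi_def)
  have "((\<lambda>t. h (\<phi>1 t, \<phi>2 (snd q))) has_vector_derivative
         (D1 (fst q) *\<^sub>R DG (1,0) + 0 *\<^sub>R DG (0,1))) (at (fst q))"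
    by (rule chain_vd[OF DG' dphi1[OF V1[OF q]] DERIV_const])
  then have "((\<lambda>t. h (phi (t, snd q))) has_vector_derivative D1 (fst q) *\<^sub>R pd_u h (phi q)) (at (fst q))"
    using pd_u_eq[OF DG] by (simp add: phi_def)
  then show "pd_u (\<lambda>q. h (phi q)) q = D1 (fst q) *\<^sub>R pd_u h (phi q)"
    by (rule pd_u_from[where h="\<lambda>q. h (phi q)"])
  have "((\<lambda>t. h (\<phi>1 (fst q), \<phi>2 t)) has_vector_derivative
         (0 *\<^sub>R DG (1,0) + D2 (snd q) *\<^sub>R DG (0,1))) (at (snd q))"
    by (rule chain_vd[OF DG' DERIV_const dphi2[OF V2[OF q]]])
  then have "((\<lambda>t. h (phi (fst q, t))) has_vector_derivative D2 (snd q) *\<^sub>R pd_v h (phi q)) (at (snd q))"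
    using pd_v_eq[OF DG] by (simp add: phi_def)
  then show "pd_v (\<lambda>q. h (phi q)) q = D2 (snd q) *\<^sub>R pd_v h (phi q)"
    by (rule pd_v_from[where h="\<lambda>q. h (phi q)"])
qed

lemma sc_fst:
  fixes Hf :: "real \<times> real \<Rightarrow> 'a::real_normed_vector"
  assumes al: "(\<alpha> has_real_derivative \<alpha>') (at (fst q))" and hd: "Hf differentiable (at q)"
  shows "pd_u (\<lambda>q. \<alpha> (fst q) *\<^sub>R Hf q) q = \<alpha>' *\<^sub>R Hf q + \<alpha> (fst q) *\<^sub>R pd_u Hf q"
    and "pd_v (\<lambda>q. \<alpha> (fst q) *\<^sub>R Hf q) q = \<alpha> (fst q) *\<^sub>R pd_v Hf q"
proof -
  have a1: "((\<lambda>t. \<alpha> t) has_vector_derivative \<alpha>') (at (fst q))"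
    using al by (simp add: has_real_derivative_iff_has_vector_derivative)
  have "((\<lambda>t. \<alpha> t *\<^sub>R Hf (t, snd q)) has_vector_derivative \<alpha> (fst q) *\<^sub>R pd_u Hf q + \<alpha>' *\<^sub>R Hf (fst q, snd q)) (at (fst q))"
    by (rule bounded_bilinear.has_vector_derivative[OF bounded_bilinear_scaleR a1 pd_u_works[OF hd]])
  then show "pd_u (\<lambda>q. \<alpha> (fst q) *\<^sub>R Hf q) q = \<alpha>' *\<^sub>R Hf q + \<alpha> (fst q) *\<^sub>R pd_u Hf q"
    using pd_u_from[where h="\<lambda>q. \<alpha> (fst q) *\<^sub>R Hf q"] by (simp add: add.commute)
  have a2: "((\<lambda>t. \<alpha> (fst q)) has_vector_derivative 0) (at (snd q))" by simp
  have "((\<lambda>t. \<alpha> (fst q) *\<^sub>R Hf (fst q, t)) has_vector_derivative \<alpha> (fst q) *\<^sub>R pd_v Hf q + 0 *\<^sub>R Hf (fst q, snd q)) (at (snd q))"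
    by (rule bounded_bilinear.has_vector_derivative[OF bounded_bilinear_scaleR a2 pd_v_works[OF hd]])
  then show "pd_v (\<lambda>q. \<alpha> (fst q) *\<^sub>R Hf q) q = \<alpha> (fst q) *\<^sub>R pd_v Hf q"
    using pd_v_from[where h="\<lambda>q. \<alpha> (fst q) *\<^sub>R Hf q"] by simp
qed

lemma sc_snd:
  fixes Hf :: "real \<times> real \<Rightarrow> 'a::real_normed_vector"
  assumes al: "(\<alpha> has_real_derivative \<alpha>') (at (snd q))" and hd: "Hf differentiable (at q)"
  shows "pd_v (\<lambda>q. \<alpha> (snd q) *\<^sub>R Hf q) q = \<alpha>' *\<^sub>R Hf q + \<alpha> (snd q) *\<^sub>R pd_v Hf q"
    and "pd_u (\<lambda>q. \<alpha> (snd q) *\<^sub>R Hf q) q = \<alpha> (snd q) *\<^sub>R pd_u Hf q"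
proof -
  have a1: "((\<lambda>t. \<alpha> t) has_vector_derivative \<alpha>') (at (snd q))"
    using al by (simp add: has_real_derivative_iff_has_vector_derivative)
  have "((\<lambda>t. \<alpha> t *\<^sub>R Hf (fst q, t)) has_vector_derivative \<alpha> (snd q) *\<^sub>R pd_v Hf q + \<alpha>' *\<^sub>R Hf (fst q, snd q)) (at (snd q))"
    by (rule bounded_bilinear.has_vector_derivative[OF bounded_bilinear_scaleR a1 pd_v_works[OF hd]])
  then show "pd_v (\<lambda>q. \<alpha> (snd q) *\<^sub>R Hf q) q = \<alpha>' *\<^sub>R Hf q + \<alpha> (snd q) *\<^sub>R pd_v Hf q"
    using pd_v_from[where h="\<lambda>q. \<alpha> (snd q) *\<^sub>R Hf q"] by (simp add: add.commute)
  have a2: "((\<lambda>t. \<alpha> (snd q)) has_vector_derivative 0) (at (fst q))" by simp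
  have "((\<lambda>t. \<alpha> (snd q) *\<^sub>R Hf (t, snd q)) has_vector_derivative \<alpha> (snd q) *\<^sub>R pd_u Hf q + 0 *\<^sub>R Hf (fst q, snd q)) (at (fst q))"
    by (rule bounded_bilinear.has_vector_derivative[OF bounded_bilinear_scaleR a2 pd_u_works[OF hd]])
  then show "pd_u (\<lambda>q. \<alpha> (snd q) *\<^sub>R Hf q) q = \<alpha> (snd q) *\<^sub>R pd_u Hf q"
    using pd_u_from[where h="\<lambda>q. \<alpha> (snd q) *\<^sub>R Hf q"] by simp
qed

lemma D1_der: "s \<in> J1 \<Longrightarrow> \<exists>e. (D1 has_real_derivative e) (at s)"
proof -
  assume s: "s \<in> J1"
  have m: "(\<phi>1 s, v0) \<in> U" using p11[OF s] v0 U_def by auto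
  obtain DG where DG: "(Inv1 has_derivative DG) (at (\<phi>1 s, v0))"
    using smooth_diff[OF sInv1 m] unfolding differentiable_def by blast
  have "((\<lambda>t. Inv1 (\<phi>1 t, v0)) has_vector_derivative (D1 s *\<^sub>R DG (1,0) + 0 *\<^sub>R DG (0,1))) (at s)"
  proof -
    have DG': "(Inv1 has_derivative DG) (at (\<phi>1 s, (\<lambda>t. v0) s))" using DG by simp
    show ?thesis using chain_vd[OF DG' dphi1[OF s] DERIV_const] by simp
  qed
  moreover have "(\<lambda>t. Inv1 (\<phi>1 t, v0)) = D1" by (simp add: fun_eq_iff Inv1_def D1_def)
  ultimately show ?thesis by (auto simp: has_real_derivative_iff_has_vector_derivative)
qed

lemma D2_der: "t \<in> J2 \<Longrightarrow> \<exists>e. (D2 has_real_derivative e) (at t)"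
proof -
  assume t: "t \<in> J2"
  have m: "(u0, \<phi>2 t) \<in> U" using p21[OF t] u0 U_def by auto
  obtain DG where DG: "(Inv2 has_derivative DG) (at (u0, \<phi>2 t))"
    using smooth_diff[OF sInv2 m] unfolding differentiable_def by blast
  have "((\<lambda>s. Inv2 (u0, \<phi>2 s)) has_vector_derivative (0 *\<^sub>R DG (1,0) + D2 t *\<^sub>R DG (0,1))) (at t)"
  proof -
    have DG': "(Inv2 has_derivative DG) (at ((\<lambda>s. u0) t, \<phi>2 t))" using DG by simp
    show ?thesis using chain_vd[OF DG' DERIV_const dphi2[OF t]] by simp
  qed
  moreover have "(\<lambda>s. Inv2 (u0, \<phi>2 s)) = D2" by (simp add: fun_eq_iff Inv2_def D2_def)
  ultimately show ?thesis by (auto simp: has_real_derivative_iff_has_vector_derivative)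
qed

end


context wsurf_rep
begin

abbreviation "X \<equiv> x \<circ> phi"

lemma Xe: "X = (\<lambda>q. x (phi q))" by (simp add: fun_eq_iff)

lemma Xu: "q \<in> V \<Longrightarrow> pd_u X q = D1 (fst q) *\<^sub>R xu (phi q)"
  unfolding Xe using pchain(1)[OF _ smooth_diff[OF sx phiU]] by simp
lemma Xv: "q \<in> V \<Longrightarrow> pd_v X q = D2 (snd q) *\<^sub>R xv (phi q)"
  unfolding Xe using pchain(2)[OF _ smooth_diff[OF sx phiU]] by simp

lemma dcomp: "q \<in> V \<Longrightarrow> smooth_on2 U h \<Longrightarrow> (\<lambda>q. h (phi q)) differentiable (at q)"
  by (rule diff_comp[OF _ smooth_diff[OF _ phiU]])

lemma Xuu: assumes q: "q \<in> V"
  shows "\<exists>e. pd_u (pd_u X) q = e *\<^sub>R xu (phi q) + (D1 (fst q) * D1 (fst q)) *\<^sub>R xuu (phi q)"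
proof -
  obtain e where e: "(D1 has_real_derivative e) (at (fst q))" using D1_der[OF V1[OF q]] by blast
  have "pd_u (pd_u X) q = pd_u (\<lambda>q. D1 (fst q) *\<^sub>R xu (phi q)) q"
    by (rule pd_u_cong[OF oV q]) (rule Xu)
  also have "\<dots> = e *\<^sub>R xu (phi q) + D1 (fst q) *\<^sub>R pd_u (\<lambda>q. xu (phi q)) q"
    by (rule sc_fst(1)[OF e dcomp[OF q sxu]])
  also have "pd_u (\<lambda>q. xu (phi q)) q = D1 (fst q) *\<^sub>R xuu (phi q)"
    by (rule pchain(1)[OF q smooth_diff[OF sxu phiU[OF q]]])
  finally show ?thesis unfolding Xe by auto
qed

lemma Xuv: assumes q: "q \<in> V"
  shows "pd_v (pd_u X) q = (D1 (fst q) * D2 (snd q)) *\<^sub>R xuv (phi q)"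
proof -
  obtain e where e: "(D1 has_real_derivative e) (at (fst q))" using D1_der[OF V1[OF q]] by blast
  have "pd_v (pd_u X) q = pd_v (\<lambda>q. D1 (fst q) *\<^sub>R xu (phi q)) q"
    by (rule pd_v_cong[OF oV q]) (rule Xu)
  also have "\<dots> = D1 (fst q) *\<^sub>R pd_v (\<lambda>q. xu (phi q)) q"
    by (rule sc_fst(2)[OF e dcomp[OF q sxu]])
  also have "pd_v (\<lambda>q. xu (phi q)) q = D2 (snd q) *\<^sub>R xuv (phi q)"
    by (rule pchain(2)[OF q smooth_diff[OF sxu phiU[OF q]]])
  finally show ?thesis unfolding Xe by simp
qed

lemma Xvv: assumes q: "q \<in> V"
  shows "\<exists>e. pd_v (pd_v X) q = e *\<^sub>R xv (phi q) + (D2 (snd q) * D2 (snd q)) *\<^sub>R xvv (phi q)"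
proof -
  obtain e where e: "(D2 has_real_derivative e) (at (snd q))" using D2_der[OF V2[OF q]] by blast
  have "pd_v (pd_v X) q = pd_v (\<lambda>q. D2 (snd q) *\<^sub>R xv (phi q)) q"
    by (rule pd_v_cong[OF oV q]) (rule Xv)
  also have "\<dots> = e *\<^sub>R xv (phi q) + D2 (snd q) *\<^sub>R pd_v (\<lambda>q. xv (phi q)) q"
    by (rule sc_snd(1)[OF e dcomp[OF q sxv]])
  also have "pd_v (\<lambda>q. xv (phi q)) q = D2 (snd q) *\<^sub>R xvv (phi q)"
    by (rule pchain(2)[OF q smooth_diff[OF sxv phiU[OF q]]])
  finally show ?thesis unfolding Xe by auto
qed

lemma crossX: "q \<in> V \<Longrightarrow> cross3 (pd_u X q) (pd_v X q) = (D1 (fst q) * D2 (snd q)) *\<^sub>R cross3 (xu (phi q)) (xv (phi q))"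
  by (simp add: Xu Xv cross_mult_left cross_mult_right)

lemma NX: assumes q: "q \<in> V" shows "unit_normal X q = nN (phi q)"
proof -
  have k: "D1 (fst q) > 0" "D2 (snd q) > 0" using D1pos[OF q] D2pos[OF q] by simp_all
  show ?thesis unfolding unit_normal_def crossX[OF q] using k by simp
qed

lemma EX: "q \<in> V \<Longrightarrow> fE X q = (D1 (fst q) * D1 (fst q)) * fE x (phi q)"
  by (simp add: fE_def Xu)
lemma GX: "q \<in> V \<Longrightarrow> fG X q = (D2 (snd q) * D2 (snd q)) * fG x (phi q)"
  by (simp add: fG_def Xv)
lemma FX: "q \<in> V \<Longrightarrow> fF X q = 0"
  using F0[OF phiU] by (simp add: fF_def Xu Xv)
lemma LX: assumes q: "q \<in> V" shows "fL X q = (D1 (fst q) * D1 (fst q)) * fL x (phi q)"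
proof -
  obtain e where "pd_u (pd_u X) q = e *\<^sub>R xu (phi q) + (D1 (fst q) * D1 (fst q)) *\<^sub>R xuu (phi q)"
    using Xuu[OF q] by blast
  then show ?thesis using N_xu[OF phiU[OF q]]
    by (simp add: fL_def NX[OF q] inner_add_left inner_add_right inner_commute)
qed
lemma MX: assumes q: "q \<in> V" shows "fM X q = 0"
  using M0[OF phiU[OF q]] by (simp add: fM_def NX[OF q] Xuv[OF q])
lemma NNX: assumes q: "q \<in> V" shows "fN X q = (D2 (snd q) * D2 (snd q)) * fN x (phi q)"
proof -
  obtain e where "pd_v (pd_v X) q = e *\<^sub>R xv (phi q) + (D2 (snd q) * D2 (snd q)) *\<^sub>R xvv (phi q)"
    using Xvv[OF q] by blast
  then show ?thesis using N_xv[OF phiU[OF q]]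
    by (simp add: fN_def NX[OF q] inner_add_left inner_add_right inner_commute)
qed

lemma nu1X: assumes q: "q \<in> V" shows "nu1 X q = nu1 x (phi q)"
  using D1pos[OF q] by (simp add: nu1_def LX[OF q] EX[OF q])
lemma nu2X: assumes q: "q \<in> V" shows "nu2 X q = nu2 x (phi q)"
  using D2pos[OF q] by (simp add: nu2_def NNX[OF q] GX[OF q])

lemma EXv: assumes q: "q \<in> V"
  shows "pd_v (fE X) q = (D1 (fst q) * D1 (fst q)) * (D2 (snd q) * pd_v (fE x) (phi q))"
proof -
  obtain e where e: "(D1 has_real_derivative e) (at (fst q))" using D1_der[OF V1[OF q]] by blast
  obtain e' where e2: "((\<lambda>s. D1 s * D1 s) has_real_derivative e') (at (fst q))"
    using DERIV_mult[OF e e] by blast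
  have "pd_v (fE X) q = pd_v (\<lambda>q. (D1 (fst q) * D1 (fst q)) *\<^sub>R fE x (phi q)) q"
    by (rule pd_v_cong[OF oV q]) (simp add: EX)
  also have "\<dots> = (D1 (fst q) * D1 (fst q)) *\<^sub>R pd_v (\<lambda>q. fE x (phi q)) q"
    using sc_fst(2)[OF e2 dcomp[OF q sE]] by simp
  also have "pd_v (\<lambda>q. fE x (phi q)) q = D2 (snd q) *\<^sub>R pd_v (fE x) (phi q)"
    by (rule pchain(2)[OF q smooth_diff[OF sE phiU[OF q]]])
  finally show ?thesis unfolding Xe by simp
qed

lemma GXu: assumes q: "q \<in> V"
  shows "pd_u (fG X) q = (D2 (snd q) * D2 (snd q)) * (D1 (fst q) * pd_u (fG x) (phi q))"
proof -
  obtain e where e: "(D2 has_real_derivative e) (at (snd q))" using D2_der[OF V2[OF q]] by blast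
  obtain e' where e2: "((\<lambda>s. D2 s * D2 s) has_real_derivative e') (at (snd q))"
    using DERIV_mult[OF e e] by blast
  have "pd_u (fG X) q = pd_u (\<lambda>q. (D2 (snd q) * D2 (snd q)) *\<^sub>R fG x (phi q)) q"
    by (rule pd_u_cong[OF oV q]) (simp add: GX)
  also have "\<dots> = (D2 (snd q) * D2 (snd q)) *\<^sub>R pd_u (\<lambda>q. fG x (phi q)) q"
    using sc_snd(2)[OF e2 dcomp[OF q sG]] by simp
  also have "pd_u (\<lambda>q. fG x (phi q)) q = D1 (fst q) *\<^sub>R pd_u (fG x) (phi q)"
    by (rule pchain(1)[OF q smooth_diff[OF sG phiU[OF q]]])
  finally show ?thesis unfolding Xe by simp
qed

lemma g1X: assumes q: "q \<in> V" shows "gamma1 X q = gamma1 x (phi q)"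
proof -
  have a: "D1 (fst q) > 0" "D2 (snd q) > 0" using D1pos[OF q] D2pos[OF q] by auto
  have s: "sqrt (D2 (snd q) * D2 (snd q) * fG x (phi q)) = D2 (snd q) * sqrt (fG x (phi q))"
    using a by (simp add: real_sqrt_mult)
  show ?thesis unfolding gamma1_def EXv[OF q] EX[OF q] GX[OF q] s using a Epos[OF phiU[OF q]]
    by (simp add: field_simps)
qed

lemma g2X: assumes q: "q \<in> V" shows "gamma2 X q = gamma2 x (phi q)"
proof -
  have a: "D1 (fst q) > 0" "D2 (snd q) > 0" using D1pos[OF q] D2pos[OF q] by auto
  have s: "sqrt (D1 (fst q) * D1 (fst q) * fE x (phi q)) = D1 (fst q) * sqrt (fE x (phi q))"
    using a by (simp add: real_sqrt_mult)
  show ?thesis unfolding gamma2_def GXu[OF q] EX[OF q] GX[OF q] s using a Gpos[OF phiU[OF q]]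
    by (simp add: field_simps)
qed

end


context wsurf_rep
begin

lemma EX2: assumes q: "q \<in> V" shows "fE X q = 2 / (f (nu (phi q)) - g (nu (phi q)))"
proof -
  have r: "phi q \<in> U" using phiU[OF q] .
  have "D1 (fst q) * D1 (fst q) = inverse (P (phi q))"
    using D1e[OF q] Ppos[OF r] by (simp add: inverse_mult_distrib[symmetric])
  then show ?thesis using EX[OF q] Pe[OF r] Epos[OF r] fmg[OF r] by (simp add: field_simps)
qed

lemma GX2: assumes q: "q \<in> V" shows "fG X q = 2 / (f (nu (phi q)) - g (nu (phi q)))"
proof -
  have r: "phi q \<in> U" using phiU[OF q] .
  have "D2 (snd q) * D2 (snd q) = inverse (Q (phi q))"
    using D2e[OF q] Qpos[OF r] by (simp add: inverse_mult_distrib[symmetric])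
  then show ?thesis using GX[OF q] Qe[OF r] Gpos[OF r] fmg[OF r] by (simp add: field_simps)
qed

lemma Kconst:
  assumes dT: "\<And>p. p \<in> U \<Longrightarrow> (\<Theta> has_real_derivative deriv f (nu p) / (f (nu p) - g (nu p))) (at (nu p))"
  shows "\<exists>C. \<forall>p\<in>U. \<Theta> (nu p) - ln (f (nu p) - g (nu p)) / 2 = C"
proof -
  define k where "k p = \<Theta> (nu p) - ln (f (nu p) - g (nu p)) / 2" for p
  have dk: "((\<lambda>t. \<Theta> t - ln (f t - g t) / 2) has_real_derivative 0) (at (nu p))" if p: "p \<in> U" for p
  proof -
    have tI: "nu p \<in> I" using nuU[OF p] by blast
    have fg: "f (nu p) - g (nu p) > 0" using fmg[OF p] .
    have d1: "((\<lambda>t. f t - g t) has_real_derivative deriv f (nu p) - deriv g (nu p)) (at (nu p))"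
      by (rule Deriv.field_differentiable_diff[OF fder[OF tI] gder[OF tI]])
    have d2: "((\<lambda>t. ln (f t - g t)) has_real_derivative inverse (f (nu p) - g (nu p)) * (deriv f (nu p) - deriv g (nu p))) (at (nu p))"
      by (rule DERIV_chain2[OF DERIV_ln[OF fg] d1])
    have d3: "((\<lambda>t. \<Theta> t - ln (f t - g t) / 2) has_real_derivative
       deriv f (nu p) / (f (nu p) - g (nu p)) - inverse (f (nu p) - g (nu p)) * (deriv f (nu p) - deriv g (nu p)) / 2) (at (nu p))"
      by (rule Deriv.field_differentiable_diff[OF dT[OF p] DERIV_cdivide[OF d2]])
    have "deriv g (nu p) = - deriv f (nu p)" using z[OF p] by simp
    then have e0: "deriv f (nu p) / (f (nu p) - g (nu p)) - inverse (f (nu p) - g (nu p)) * (deriv f (nu p) - deriv g (nu p)) / 2 = 0"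
      using fg by (simp add: field_simps)
    from d3 show ?thesis by (simp only: e0)
  qed
  have "k p = k ((a+b)/2, (c+d)/2)" if "p \<in> U" for p
  proof (rule rect_const[OF _ _ that p0U])
    fix q assume q: "q \<in> U"
    show "((\<lambda>t. k (t, snd q)) has_real_derivative 0) (at (fst q))"
      using chain_u[OF q dk[OF q]] by (simp add: k_def)
    show "((\<lambda>t. k (fst q, t)) has_real_derivative 0) (at (snd q))"
      using chain_v[OF q dk[OF q]] by (simp add: k_def)
  qed
  then show ?thesis unfolding k_def by blast
qed

lemma ln_form: "y > 0 \<Longrightarrow> ln (sqrt (2 / y)) = ln 2 / 2 - ln y / 2"
  by (simp add: ln_sqrt ln_div)

lemma admits: "admits_isothermal_geometric_principal U x I f g nu Phi Psi"
  unfolding admits_isothermal_geometric_principal_def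
proof (intro exI conjI)
  show "diffeo2 V U phi" by (rule diffeo)
  have smX: "smooth_on2 V X"
  proof -
    have m: "(\<phi>1 (fst q), \<phi>2 (snd q)) \<in> U" if "q \<in> V" for q using phiU[OF that] by (simp add: phi_def)
    have "smooth_on2 V (\<lambda>q. x (\<phi>1 (fst q), \<phi>2 (snd q)))"
      by (rule sm_comp[OF U oV sx sPhi1 sPhi2 m])
    then show ?thesis by (simp add: Xe phi_def)
  qed
  have ppV: "principal_param V X"
    unfolding principal_param_def
  proof (intro conjI ballI)
    show "open V" by (rule oV)
    show "smooth_on2 V X" by (rule smX)
    fix q assume q: "q \<in> V"
    show "cross3 (pd_u X q) (pd_v X q) \<noteq> 0"
      using crossX[OF q] D1pos[OF q] D2pos[OF q] cr[OF phiU[OF q]] by simp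
    show "fF X q = 0" by (rule FX[OF q])
    show "fM X q = 0" by (rule MX[OF q])
  qed
  have srV: "strongly_regular V X"
    unfolding strongly_regular_def
  proof (intro conjI ballI ppV)
    fix q assume q: "q \<in> V"
    show "nu1 X q - nu2 X q > 0" using srU[OF phiU[OF q]] nu1X[OF q] nu2X[OF q] by simp
    show "(nu1 X q - nu2 X q) * gamma1 X q * gamma2 X q \<noteq> 0"
      using srU[OF phiU[OF q]] nu1X[OF q] nu2X[OF q] g1X[OF q] g2X[OF q] by simp
  qed
  show "weingarten V X I f g (nu \<circ> phi)"
    unfolding weingarten_def
  proof (intro conjI ballI srV isI)
    fix t assume "t \<in> I"
    then show "f differentiable (at t)" "g differentiable (at t)" "f t - g t > 0" "deriv f t * deriv g t \<noteq> 0"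
      using fgI by blast+
  next
    fix q assume q: "q \<in> V"
    have r: "phi q \<in> U" using phiU[OF q] .
    have nd: "nu differentiable (at (phi q))" using nuU[OF r] by blast
    have ne: "(\<lambda>q. nu (phi q)) = nu \<circ> phi" by (simp add: fun_eq_iff)
    show "(nu \<circ> phi) differentiable (at q)" using diff_comp[OF q nd] ne by simp
    show "(nu \<circ> phi) q \<in> I" using nuU[OF r] by simp
    show "pd_u (nu \<circ> phi) q * pd_v (nu \<circ> phi) q \<noteq> 0"
      using pchain[OF q nd] ne D1pos[OF q] D2pos[OF q] nuU[OF r] by simp
    show "nu1 X q = f ((nu \<circ> phi) q)" using nu1X[OF q] nuU[OF r] by simp
    show "nu2 X q = g ((nu \<circ> phi) q)" using nu2X[OF q] nuU[OF r] by simp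
  qed
  show "geometric_principal V X Phi Psi (nu \<circ> phi)"
    unfolding geometric_principal_def
  proof (intro conjI)
    obtain C where C: "\<And>p. p \<in> U \<Longrightarrow> Phi (nu p) - ln (f (nu p) - g (nu p)) / 2 = C"
      using Kconst[of Phi] Phi nuU by blast
    show "\<exists>c. \<forall>q\<in>V. lam X Phi (nu \<circ> phi) q = c"
    proof (intro exI ballI)
      fix q assume q: "q \<in> V"
      have r: "phi q \<in> U" using phiU[OF q] .
      show "lam X Phi (nu \<circ> phi) q = ln 2 / 2 + C"
        using C[OF r] EX2[OF q] ln_form[OF fmg[OF r]] by (simp add: lam_def)
    qed
    have dPsi: "(Psi has_real_derivative deriv f (nu p) / (f (nu p) - g (nu p))) (at (nu p))" if p: "p \<in> U" for p
    proof -
      have "deriv g (nu p) / (g (nu p) - f (nu p)) = deriv f (nu p) / (f (nu p) - g (nu p))"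
      proof -
        have "deriv g (nu p) = - deriv f (nu p)" using z[OF p] by simp
        moreover have "g (nu p) - f (nu p) = - (f (nu p) - g (nu p))" by simp
        ultimately show ?thesis by (simp only: divide_minus_right divide_minus_left minus_minus)
      qed
      then show ?thesis using Psi[of "nu p"] nuU[OF p] by simp
    qed
    obtain C' where C': "\<And>p. p \<in> U \<Longrightarrow> Psi (nu p) - ln (f (nu p) - g (nu p)) / 2 = C'"
      using Kconst[OF dPsi] by blast
    show "\<exists>c. \<forall>q\<in>V. mu X Psi (nu \<circ> phi) q = c"
    proof (intro exI ballI)
      fix q assume q: "q \<in> V"
      have r: "phi q \<in> U" using phiU[OF q] .
      show "mu X Psi (nu \<circ> phi) q = ln 2 / 2 + C'"
        using C'[OF r] GX2[OF q] ln_form[OF fmg[OF r]] by (simp add: mu_def)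
    qed
  qed
  show "\<forall>q\<in>V. fE X q = fG X q \<and> fF X q = 0"
    using EX2 GX2 FX by simp
qed

end


context wsurf
begin

lemma S1_bwd:
  assumes z: "\<forall>p\<in>U. deriv f (nu p) + deriv g (nu p) = 0"
  shows "admits_isothermal_geometric_principal U x I f g nu Phi Psi"
proof -
  obtain H0 where H0: "\<And>p. p \<in> U \<Longrightarrow> (f (nu p) + g (nu p)) / 2 = H0" using S2 z by blast
  have Hd: "\<And>p. p \<in> U \<Longrightarrow> f (nu p) + g (nu p) = 2 * H0" using H0 by fastforce
  define u0 where "u0 = (a+b)/2"
  define v0 where "v0 = (c+d)/2"
  have u0: "u0 \<in> {a<..<b}" and v0: "v0 \<in> {c<..<d}" using ab cd by (auto simp: u0_def v0_def)
  have fg: "f (nu p) - g (nu p) > 0" if "p \<in> U" for p using srU[OF that] nuU[OF that] by simp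
  have Pp: "fL x p - H0 * fE x p > 0" if p: "p \<in> U" for p
  proof -
    have e1: "fL x p = f (nu p) * fE x p" using nuU[OF p] Epos[OF p] by (simp add: nu1_def field_simps)
    have h: "2 * H0 = f (nu p) + g (nu p)" using Hd[OF p] by simp
    have "fL x p - H0 * fE x p = (2 * f (nu p) - 2 * H0) * fE x p / 2" unfolding e1 by (simp add: algebra_simps)
    also have "\<dots> = fE x p * (f (nu p) - g (nu p)) / 2" unfolding h by (simp add: algebra_simps)
    finally have "fL x p - H0 * fE x p = fE x p * (f (nu p) - g (nu p)) / 2" .
    moreover have "fE x p * (f (nu p) - g (nu p)) > 0" using Epos[OF p] fg[OF p] by (rule mult_pos_pos)
    ultimately show ?thesis by simp
  qed
  have Qp: "H0 * fG x p - fN x p > 0" if p: "p \<in> U" for p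
  proof -
    have e1: "fN x p = g (nu p) * fG x p" using nuU[OF p] Gpos[OF p] by (simp add: nu2_def field_simps)
    have h: "2 * H0 = f (nu p) + g (nu p)" using Hd[OF p] by simp
    have "H0 * fG x p - fN x p = (2 * H0 - 2 * g (nu p)) * fG x p / 2" unfolding e1 by (simp add: algebra_simps)
    also have "\<dots> = fG x p * (f (nu p) - g (nu p)) / 2" unfolding h by (simp add: algebra_simps)
    finally have "H0 * fG x p - fN x p = fG x p * (f (nu p) - g (nu p)) / 2" .
    moreover have "fG x p * (f (nu p) - g (nu p)) > 0" using Gpos[OF p] fg[OF p] by (rule mult_pos_pos)
    ultimately show ?thesis by simp
  qed
  have cP: "continuous_on U (\<lambda>p. sqrt (fL x p - H0 * fE x p))"
    by (rule smooth_cont[OF sm_sqrt[OF U sm_minus[OF U sL sm_mult[OF U sm_const sE]] Pp]])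
  have cQ: "continuous_on U (\<lambda>p. sqrt (H0 * fG x p - fN x p))"
    by (rule smooth_cont[OF sm_sqrt[OF U sm_minus[OF U sm_mult[OF U sm_const sG] sNN] Qp]])
  have c1: "continuous_on {a<..<b} (\<lambda>u. sqrt (fL x (u, v0) - H0 * fE x (u, v0)))"
    by (rule continuous_on_compose2[OF cP, of _ "\<lambda>u. (u, v0)"]) (use v0 U_def in \<open>auto intro!: continuous_intros\<close>)
  have c2: "continuous_on {c<..<d} (\<lambda>v. sqrt (H0 * fG x (u0, v) - fN x (u0, v)))"
    by (rule continuous_on_compose2[OF cQ, of _ "\<lambda>v. (u0, v)"]) (use u0 U_def in \<open>auto intro!: continuous_intros\<close>)
  have pos1: "sqrt (fL x (u, v0) - H0 * fE x (u, v0)) > 0" if "u \<in> {a<..<b}" for u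
    using Pp[of "(u, v0)"] that v0 U_def by auto
  have pos2: "sqrt (H0 * fG x (u0, v) - fN x (u0, v)) > 0" if "v \<in> {c<..<d}" for v
    using Qp[of "(u0, v)"] that u0 U_def by auto
  obtain F1 J1 \<phi>1 where R1:
    "\<And>u. u\<in>{a<..<b} \<Longrightarrow> (F1 has_real_derivative sqrt (fL x (u, v0) - H0 * fE x (u, v0))) (at u)"
    "open J1" "J1 = F1 ` {a<..<b}" "\<And>s. s\<in>J1 \<Longrightarrow> \<phi>1 s \<in> {a<..<b}" "\<And>s. s\<in>J1 \<Longrightarrow> F1 (\<phi>1 s) = s"
    "\<And>u. u\<in>{a<..<b} \<Longrightarrow> \<phi>1 (F1 u) = u"
    "\<And>s. s \<in> J1 \<Longrightarrow> (\<phi>1 has_real_derivative inverse (sqrt (fL x (\<phi>1 s, v0) - H0 * fE x (\<phi>1 s, v0)))) (at s)"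
    apply (rule reparam[OF ab c1])
     apply (erule pos1)
    apply (rule that)
          apply assumption+
    done
  obtain F2 J2 \<phi>2 where R2:
    "\<And>v. v\<in>{c<..<d} \<Longrightarrow> (F2 has_real_derivative sqrt (H0 * fG x (u0, v) - fN x (u0, v))) (at v)"
    "open J2" "J2 = F2 ` {c<..<d}" "\<And>s. s\<in>J2 \<Longrightarrow> \<phi>2 s \<in> {c<..<d}" "\<And>s. s\<in>J2 \<Longrightarrow> F2 (\<phi>2 s) = s"
    "\<And>v. v\<in>{c<..<d} \<Longrightarrow> \<phi>2 (F2 v) = v"
    "\<And>s. s \<in> J2 \<Longrightarrow> (\<phi>2 has_real_derivative inverse (sqrt (H0 * fG x (u0, \<phi>2 s) - fN x (u0, \<phi>2 s)))) (at s)"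
    apply (rule reparam[OF cd c2])
     apply (erule pos2)
    apply (rule that)
          apply assumption+
    done
  interpret R: wsurf_rep a b c d U x I f g Phi Psi nu H0 u0 v0 F1 F2 \<phi>1 \<phi>2 J1 J2
    by (unfold_locales) (use z Hd u0 v0 R1 R2 in auto)
  show ?thesis by (rule R.admits)
qed

end

theorem corollary4p7:
  fixes x :: surf and f g Phi Psi :: "real \<Rightarrow> real" and nu :: "real \<times> real \<Rightarrow> real"
    and I :: "real set" and a b c d :: real
  assumes "a < b" and "c < d"
    and U_def: "U = {a<..<b} \<times> {c<..<d}"
    and "open I"
    and W: "weingarten U x I f g nu"
    and Phi: "\<And>t. t \<in> I \<Longrightarrow> (Phi has_real_derivative (deriv f t / (f t - g t))) (at t)"
    and Psi: "\<And>t. t \<in> I \<Longrightarrow> (Psi has_real_derivative (deriv g t / (g t - f t))) (at t)"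
  shows "(admits_isothermal_geometric_principal U x I f g nu Phi Psi \<longleftrightarrow>
            (\<forall>p\<in>U. deriv f (nu p) + deriv g (nu p) = 0))
       \<and> ((\<forall>p\<in>U. deriv f (nu p) + deriv g (nu p) = 0) \<longleftrightarrow>
            (\<exists>H. \<forall>p\<in>U. (f (nu p) + g (nu p)) / 2 = H))"
proof -
  interpret wsurf a b c d U x I f g Phi Psi nu
    by (rule wsurf.intro) (use assms in auto)
  show ?thesis using S1_fwd S1_bwd S2 by blast
qed


end
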